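(* Let $s\in[0,1]$ and $x\in\mathbb R$. Then there exists a first time $t_0=t_0(s,x)\ge0$ at which the solution $(\xi(\cdot,x),\eta(\cdot,x))$ of the initial value problem (IVP) meets the graph of $w+s\varphi$, i.e. $\eta(t_0,x)=w(\xi(t_0,x))+s\varphi(\xi(t_0,x))$ and this fails for $0\le t<t_0$. Moreover: if $s=0$ or $\varphi(x)=0$ then $t_0(s,x)=0$; if $\varphi(x)\ne0$ and $\varphi'(x)=w'(x)=0$ then $t_0(s,x)=s$; in all other cases $0\le t_0(s,x)\le s$. Finally, $t_0$ is of class $C^2$ on $[0,1]\times\{x\in\mathbb R:\varphi(x)\ne0\}$, and if $\varphi(x)\neq0$ then $\varphi(\xi(t,x))\varphi(x)>0$ for all $0\le t\le t_0(s,x)$.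
   Context: Let $w\in C^3(\mathbb R)$ be periodic with $w>0$ on $[-1,1]$. Let $-1<a<b<1$ and let $\varphi:[a,b]\to\mathbb R$ be a polynomial with $\varphi^{(k)}(a)=\varphi^{(k)}(b)=0$ for $k=0,1,2,3$, extended by zero outside $[a,b]$ (so $\varphi\in C^3_c(\mathbb R)$). For $x\in\mathbb R$, $(\xi(t,x),\eta(t,x))$, $t\in\mathbb R$, denotes the unique global solution of (IVP): $$\frac{d\xi}{dt}=-w'(\xi)\varphi(\xi)-(\eta-w(\xi))\varphi'(\xi),\qquad\frac{d\eta}{dt}=\varphi(\xi),\qquad \xi(0)=x,\ \eta(0)=w(x).$$ *)

theory Defs
  imports "HOL-Analysis.Analysis" "HOL-Computational_Algebra.Polynomial"
begin

definition C3 :: "(real \<Rightarrow> real) \<Rightarrow> bool" where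
  "C3 f \<longleftrightarrow> (\<forall>k<3. \<forall>x. ((deriv ^^ k) f) differentiable (at x))
                 \<and> continuous_on UNIV ((deriv ^^ 3) f)"

definition periodic :: "(real \<Rightarrow> real) \<Rightarrow> bool" where
  "periodic f \<longleftrightarrow> (\<exists>T>0. \<forall>x. f (x + T) = f x)"

definition bump :: "real poly \<Rightarrow> real \<Rightarrow> real \<Rightarrow> real \<Rightarrow> real" where
  "bump p a b x = (if a \<le> x \<and> x \<le> b then poly p x else 0)"

definition C2_on :: "(real \<times> real) set \<Rightarrow> (real \<times> real \<Rightarrow> real) \<Rightarrow> bool" where
  "C2_on S f \<longleftrightarrow> (\<exists>f1 f2 f11 f12 f21 f22.
     (\<forall>p\<in>S. (f has_derivative (\<lambda>h. f1 p * fst h + f2 p * snd h)) (at p within S)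
           \<and> (f1 has_derivative (\<lambda>h. f11 p * fst h + f12 p * snd h)) (at p within S)
           \<and> (f2 has_derivative (\<lambda>h. f21 p * fst h + f22 p * snd h)) (at p within S))
     \<and> continuous_on S f11 \<and> continuous_on S f12
     \<and> continuous_on S f21 \<and> continuous_on S f22)"

end

theory Submission
  imports Defs
begin

lemma bump_cont:
  assumes "a < b" "poly q a = 0" "poly q b = 0"
  shows "continuous_on UNIV (bump q a b)"
proof -
  have "continuous_on ({a..b} \<union> ({..a} \<union> {b..})) (\<lambda>x. if x \<in> {a..b} then poly q x else 0)"
    by (rule continuous_on_cases) (use assms in \<open>auto intro!: continuous_intros\<close>)
  moreover have "{a..b} \<union> ({..a} \<union> {b..}) = (UNIV::real set)" by auto
  ultimately show ?thesis unfolding bump_def[abs_def] by (simp add: atLeastAtMost_iff)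
qed

lemma bump_deriv:
  assumes ab: "a < b" and qa: "poly q a = 0" and qb: "poly q b = 0"
    and dqa: "poly (pderiv q) a = 0" and dqb: "poly (pderiv q) b = 0"
  shows "(bump q a b has_real_derivative bump (pderiv q) a b y) (at y)"
proof -
  consider "y < a" | "y = a" | "a < y \<and> y < b" | "y = b" | "b < y" by linarith
  then show ?thesis
  proof cases
    case 1
    have "((\<lambda>_. 0) has_real_derivative 0) (at y)" by simp
    then have "(bump q a b has_real_derivative 0) (at y)"
      by (rule has_field_derivative_transform_within_open[where S="{..<a}"])
         (use 1 in \<open>auto simp: bump_def\<close>)
    then show ?thesis using 1 by (simp add: bump_def)
  next
    case 5
    have "((\<lambda>_. 0) has_real_derivative 0) (at y)" by simp
    then have "(bump q a b has_real_derivative 0) (at y)"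
      by (rule has_field_derivative_transform_within_open[where S="{b<..}"])
         (use 5 in \<open>auto simp: bump_def\<close>)
    then show ?thesis using 5 by (simp add: bump_def)
  next
    case 3
    have "(poly q has_real_derivative poly (pderiv q) y) (at y)" by (rule poly_DERIV)
    then have "(bump q a b has_real_derivative poly (pderiv q) y) (at y)"
      by (rule has_field_derivative_transform_within_open[where S="{a<..<b}"])
         (use 3 in \<open>auto simp: bump_def\<close>)
    then show ?thesis using 3 by (simp add: bump_def)
  next
    case 2
    have L: "((\<lambda>z. (bump q a b z - bump q a b y) / (z - y)) \<longlongrightarrow> 0) (at y within {..y})"
    proof -
      have "((\<lambda>z. 0::real) \<longlongrightarrow> 0) (at y within {..y})" by simp
      then show ?thesis
        by (rule Lim_transform_within[where d=1]) (use 2 ab qa in \<open>auto simp: bump_def\<close>)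
    qed
    have R: "((\<lambda>z. (bump q a b z - bump q a b y) / (z - y)) \<longlongrightarrow> 0) (at y within {y..})"
    proof -
      have "(poly q has_real_derivative poly (pderiv q) y) (at y)" by (rule poly_DERIV)
      then have "((\<lambda>z. (poly q z - poly q y) / (z - y)) \<longlongrightarrow> 0) (at y)"
        using 2 dqa by (simp add: has_field_derivative_iff)
      then have "((\<lambda>z. (poly q z - poly q y) / (z - y)) \<longlongrightarrow> 0) (at y within {y..})"
        by (rule tendsto_within_subset) auto
      then show ?thesis
        by (rule Lim_transform_within[where d="b-a"])
           (use 2 ab in \<open>auto simp: bump_def dist_real_def\<close>)
    qed
    have "((\<lambda>z. (bump q a b z - bump q a b y) / (z - y)) \<longlongrightarrow> 0) (at y)"
      by (rule Lim_Un_univ[OF L R]) auto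
    then show ?thesis using 2 dqa ab by (simp add: has_field_derivative_iff bump_def)
  next
    case 4
    have L: "((\<lambda>z. (bump q a b z - bump q a b y) / (z - y)) \<longlongrightarrow> 0) (at y within {y..})"
    proof -
      have "((\<lambda>z. 0::real) \<longlongrightarrow> 0) (at y within {y..})" by simp
      then show ?thesis
        by (rule Lim_transform_within[where d=1]) (use 4 ab qb in \<open>auto simp: bump_def\<close>)
    qed
    have R: "((\<lambda>z. (bump q a b z - bump q a b y) / (z - y)) \<longlongrightarrow> 0) (at y within {..y})"
    proof -
      have "(poly q has_real_derivative poly (pderiv q) y) (at y)" by (rule poly_DERIV)
      then have "((\<lambda>z. (poly q z - poly q y) / (z - y)) \<longlongrightarrow> 0) (at y)"
        using 4 dqb by (simp add: has_field_derivative_iff)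
      then have "((\<lambda>z. (poly q z - poly q y) / (z - y)) \<longlongrightarrow> 0) (at y within {..y})"
        by (rule tendsto_within_subset) auto
      then show ?thesis
        by (rule Lim_transform_within[where d="b-a"])
           (use 4 ab in \<open>auto simp: bump_def dist_real_def\<close>)
    qed
    have "((\<lambda>z. (bump q a b z - bump q a b y) / (z - y)) \<longlongrightarrow> 0) (at y)"
      by (rule Lim_Un_univ[OF R L]) auto
    then show ?thesis using 4 dqb ab by (simp add: has_field_derivative_iff bump_def)
  qed
qed

lemma gronwall_sq:
  fixes f f' :: "real \<Rightarrow> real"
  assumes cont: "continuous_on {0..t} f"
    and der: "\<And>s. 0 < s \<Longrightarrow> s < t \<Longrightarrow> (f has_real_derivative f' s) (at s)"
    and bnd: "\<And>s. 0 < s \<Longrightarrow> s < t \<Longrightarrow> \<bar>f' s\<bar> \<le> L * \<bar>f s\<bar> + e"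
    and L: "L \<ge> 0" and e: "e \<ge> 0" and t: "0 \<le> t"
  shows "(f t)^2 \<le> ((f 0)^2 + e^2 * t) * exp ((2*L+1)*t)"
proof -
  define c where "c = 2*L+1"
  define G where "G r = (f r)^2 * exp (- (c*r)) - e^2 * r" for r
  have "G t \<le> G 0"
  proof (rule DERIV_nonpos_imp_decreasing_open[OF t])
    fix s assume s: "0 < s" "s < t"
    have D: "(G has_real_derivative (2 * f s * f' s * exp (- (c * s)) + (f s)^2 * (exp (- (c * s)) * (-c)) - e^2)) (at s)"
      unfolding G_def[abs_def]
      by (auto intro!: derivative_eq_intros der s)
    have "2 * f s * f' s \<le> 2 * \<bar>f s\<bar> * \<bar>f' s\<bar>"
      using abs_ge_self[of "f s * f' s"] by (simp add: abs_mult)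
    also have "\<dots> \<le> 2 * \<bar>f s\<bar> * (L * \<bar>f s\<bar> + e)"
      by (intro mult_left_mono bnd s) auto
    also have "\<dots> \<le> c * (f s)^2 + e^2"
    proof -
      have "2 * \<bar>f s\<bar> * e \<le> (f s)^2 + e^2"
        using sum_squares_ge_zero[of "\<bar>f s\<bar> - e" 0]
        by (simp add: power2_eq_square algebra_simps)
      then show ?thesis by (simp add: c_def power2_eq_square algebra_simps)
    qed
    finally have A: "2 * f s * f' s - c * (f s)^2 \<le> e^2" by simp
    have ex: "exp (- (c * s)) \<le> 1" using s L by (simp add: c_def)
    have "2 * f s * f' s * exp (- (c * s)) + (f s)^2 * (exp (- (c * s)) * (-c)) - e^2
          = (2 * f s * f' s - c * (f s)^2) * exp (- (c * s)) - e^2" by (simp add: algebra_simps)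
    also have "\<dots> \<le> e^2 * exp (- (c * s)) - e^2"
      by (intro diff_right_mono mult_right_mono A) auto
    also have "\<dots> \<le> 0" using ex by (simp add: mult_left_le)
    finally show "\<exists>y. (G has_real_derivative y) (at s) \<and> y \<le> 0" using D by blast
  next
    show "continuous_on {0..t} G" unfolding G_def[abs_def]
      by (intro continuous_intros cont)
  qed
  then have "(f t)^2 * exp (- (c * t)) \<le> (f 0)^2 + e^2 * t" by (simp add: G_def)
  then have "(f t)^2 * exp (- (c * t)) * exp (c * t) \<le> ((f 0)^2 + e^2 * t) * exp (c * t)"
    by (rule mult_right_mono) simp
  then show ?thesis by (simp add: c_def mult.assoc flip: exp_add)
qed

lemma mvt_between:
  fixes f f' :: "real \<Rightarrow> real"
  assumes "\<And>z. \<bar>z - x\<bar> \<le> \<bar>y - x\<bar> \<Longrightarrow> (f has_real_derivative f' z) (at z)"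
  shows "\<exists>z. \<bar>z - x\<bar> \<le> \<bar>y - x\<bar> \<and> f y - f x = (y - x) * f' z"
proof -
  consider "y = x" | "x < y" | "y < x" by linarith
  then show ?thesis
  proof cases
    case 1 then show ?thesis by auto
  next
    case 2
    have "\<exists>z>x. z < y \<and> f y - f x = (y - x) * f' z"
      by (rule MVT2[OF 2]) (use assms 2 in auto)
    then show ?thesis using 2 by force
  next
    case 3
    have "\<exists>z>y. z < x \<and> f x - f y = (x - y) * f' z"
      by (rule MVT2[OF 3]) (use assms 3 in auto)
    then obtain z where "z > y" "z < x" "f x - f y = (x - y) * f' z" by blast
    then show ?thesis by (intro exI[of _ z]) (auto simp: algebra_simps)
  qed
qed

lemma partials_deriv:
  fixes f fs fx :: "real \<times> real \<Rightarrow> real"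
  assumes U: "open U"
    and ds: "\<And>s x. s \<in> {0..1} \<Longrightarrow> x \<in> U \<Longrightarrow>
               ((\<lambda>s. f (s,x)) has_real_derivative fs (s,x)) (at s within {0..1})"
    and dx: "\<And>s x. s \<in> {0..1} \<Longrightarrow> x \<in> U \<Longrightarrow>
               ((\<lambda>x. f (s,x)) has_real_derivative fx (s,x)) (at x)"
    and cx: "continuous_on ({0..1} \<times> U) fx"
    and p: "p \<in> {0..1} \<times> U"
  shows "(f has_derivative (\<lambda>h. fs p * fst h + fx p * snd h)) (at p within {0..1} \<times> U)"
proof -
  obtain s x where px: "p = (s,x)" by (cases p)
  have s: "s \<in> {0..1}" and x: "x \<in> U" using p px by auto
  show ?thesis unfolding has_derivative_within_alt
  proof (intro conjI allI impI)
    show "bounded_linear (\<lambda>h. fs p * fst h + fx p * snd h)"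
      by (intro bounded_linear_intros)
  next
    fix e :: real assume e: "e > 0"
    have "((\<lambda>s. f (s,x)) has_derivative (\<lambda>h. fs (s,x) * h)) (at s within {0..1})"
      using ds[OF s x] by (simp add: has_field_derivative_def)
    then obtain d1 where d1: "d1 > 0" and d1b: "\<And>s'. s' \<in> {0..1} \<Longrightarrow> norm (s' - s) < d1 \<Longrightarrow>
        norm (f (s',x) - f (s,x) - fs (s,x) * (s' - s)) \<le> e/2 * norm (s' - s)"
      unfolding has_derivative_within_alt using e by (meson half_gt_zero)
    obtain d2 where d2: "d2 > 0" and d2b: "\<And>q. q \<in> {0..1} \<times> U \<Longrightarrow> dist q p < d2 \<Longrightarrow>
        dist (fx q) (fx p) < e/2"
      using cx p e unfolding continuous_on_iff by (meson half_gt_zero)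
    obtain d3 where d3: "d3 > 0" and d3b: "ball x d3 \<subseteq> U"
      using U x open_contains_ball by blast
    define d where "d = min d1 (min d2 d3)"
    have "d > 0" using d1 d2 d3 by (simp add: d_def)
    moreover have "norm (f y - f p - (fs p * fst (y - p) + fx p * snd (y - p))) \<le> e * norm (y - p)"
      if y: "y \<in> {0..1} \<times> U" "norm (y - p) < d" for y
    proof -
      obtain s' x' where yx: "y = (s',x')" by (cases y)
      have s': "s' \<in> {0..1}" using y yx by auto
      have ns: "\<bar>s' - s\<bar> \<le> norm (y - p)" and nx: "\<bar>x' - x\<bar> \<le> norm (y - p)"
        using norm_fst_le[of "s' - s" "x' - x"] norm_snd_le[of "x' - x" "s' - s"] yx px by auto
      have inU: "\<bar>z - x\<bar> \<le> \<bar>x' - x\<bar> \<Longrightarrow> z \<in> U" for z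
        using d3b nx y(2) by (auto simp: d_def dist_real_def abs_minus_commute subset_iff)
      obtain z where z: "\<bar>z - x\<bar> \<le> \<bar>x' - x\<bar>" and zeq: "f (s',x') - f (s',x) = (x' - x) * fx (s',z)"
        using mvt_between[of x x' "\<lambda>z. f (s',z)" "\<lambda>z. fx (s',z)"] dx[OF s' inU] by blast
      have "dist (s',z) p \<le> norm (y - p)"
      proof -
        have "(z - x)^2 \<le> (x' - x)^2" using z by (simp add: abs_le_square_iff)
        then show ?thesis
          using px yx by (simp add: dist_Pair_Pair norm_Pair real_sqrt_le_mono dist_real_def)
      qed
      then have "dist (fx (s',z)) (fx p) < e/2"
        using y(2) s' inU[OF z] by (intro d2b) (auto simp: d_def)
      then have fxb: "\<bar>fx (s',z) - fx p\<bar> \<le> e/2" by (simp add: dist_real_def)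
      have "\<bar>x' - x\<bar> * \<bar>fx (s',z) - fx p\<bar> \<le> norm (y - p) * (e/2)"
        by (rule mult_mono[OF nx fxb]) auto
      then have B1: "\<bar>(x' - x) * (fx (s',z) - fx p)\<bar> \<le> e/2 * norm (y - p)"
        by (simp add: abs_mult mult.commute)
      have B2: "\<bar>f (s',x) - f (s,x) - fs (s,x) * (s' - s)\<bar> \<le> e/2 * norm (y - p)"
      proof -
        have "norm (s' - s) < d1" using ns y(2) by (simp add: d_def)
        then have "\<bar>f (s',x) - f (s,x) - fs (s,x) * (s' - s)\<bar> \<le> e/2 * \<bar>s' - s\<bar>"
          using d1b[OF s'] by simp
        also have "\<dots> \<le> e/2 * norm (y - p)" using ns e by (intro mult_left_mono) auto
        finally show ?thesis .
      qed
      have "f y - f p - (fs p * fst (y - p) + fx p * snd (y - p))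
            = (x' - x) * (fx (s',z) - fx p) + (f (s',x) - f (s,x) - fs (s,x) * (s' - s))"
        using zeq yx px by (simp add: algebra_simps)
      then show ?thesis using B1 B2 by (simp only: real_norm_def)
    qed
    ultimately show "\<exists>d>0. \<forall>y\<in>{0..1} \<times> U. norm (y - p) < d \<longrightarrow>
        norm (f y - f p - (fs p * fst (y - p) + fx p * snd (y - p))) \<le> e * norm (y - p)"
      by blast
  qed
qed

lemma int_rescale:
  fixes g :: "real \<Rightarrow> real"
  assumes "continuous_on {0..1} g" "s \<in> {0..1}"
  shows "integral {0..s} g = s * integral {0..1} (\<lambda>\<theta>. g (s * \<theta>))"
proof (cases "s = 0")
  case True then show ?thesis by simp
next
  case False
  then have sp: "s > 0" using assms by auto
  have "g integrable_on {0..s}"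
    by (rule integrable_continuous_real) (use assms in \<open>auto intro: continuous_on_subset\<close>)
  then have "(g has_integral integral {0..s} g) (cbox 0 s)" by (simp add: has_integral_integral)
  from has_integral_affinity'[OF this sp, of 0]
  have "((\<lambda>\<theta>. g (s * \<theta>)) has_integral integral {0..s} g / s) {0..1}"
    using sp by (simp add: divide_simps)
  then have "integral {0..1} (\<lambda>\<theta>. g (s * \<theta>)) = integral {0..s} g / s"
    by (rule integral_unique)
  then show ?thesis using sp by simp
qed

lemma cont_param_int:
  fixes g :: "real \<Rightarrow> real \<Rightarrow> real"
  assumes cg: "continuous_on ({0..1} \<times> UNIV) (\<lambda>(r,x). g r x)"
  shows "continuous_on ({0..1} \<times> UNIV) (\<lambda>(s,x). integral {0..s} (\<lambda>r. g r x))"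
proof -
  have c1: "continuous_on (({0..1} \<times> UNIV) \<times> cbox 0 1) (\<lambda>(sx, \<theta>). g (fst sx * \<theta>) (snd sx))"
  proof -
    have "continuous_on (({0..1::real} \<times> (UNIV::real set)) \<times> cbox 0 1) (\<lambda>(sx, \<theta>::real). (fst sx * \<theta>, snd sx))"
      by (auto intro!: continuous_intros simp: split_beta)
    moreover have "(\<lambda>(sx, \<theta>::real). (fst sx * \<theta>, snd sx)) ` (({0..1::real} \<times> (UNIV::real set)) \<times> cbox 0 1) \<subseteq> {0..1} \<times> UNIV"
      by (auto simp: mult_le_one)
    ultimately have "continuous_on (({0..1} \<times> UNIV) \<times> cbox 0 1) ((\<lambda>(r,x). g r x) \<circ> (\<lambda>(sx, \<theta>::real). (fst sx * \<theta>, snd sx)))"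
      by (rule continuous_on_compose[OF _ continuous_on_subset[OF cg]])
    then show ?thesis by (simp add: o_def split_beta)
  qed
  have "continuous_on ({0..1} \<times> UNIV) (\<lambda>sx. integral (cbox 0 1) (\<lambda>\<theta>. g (fst sx * \<theta>) (snd sx)))"
    using integral_continuous_on_param[where U="{0..1} \<times> UNIV" and f="\<lambda>sx \<theta>. g (fst sx * \<theta>) (snd sx)" and a=0 and b=1] c1
    by simp
  then have "continuous_on ({0..1} \<times> UNIV) (\<lambda>sx. fst sx * integral (cbox 0 1) (\<lambda>\<theta>. g (fst sx * \<theta>) (snd sx)))"
    by (intro continuous_intros)
  moreover have "fst sx * integral (cbox 0 1) (\<lambda>\<theta>. g (fst sx * \<theta>) (snd sx)) = (\<lambda>(s,x). integral {0..s} (\<lambda>r. g r x)) sx"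
    if "sx \<in> {0..1} \<times> UNIV" for sx
  proof -
    obtain s x where sx: "sx = (s,x)" by (cases sx)
    have "continuous_on {0..1} (\<lambda>r. g r x)"
      by (rule continuous_on_compose2[OF cg, where f="\<lambda>r. (r,x)", simplified]) (auto intro!: continuous_intros)
    then show ?thesis using int_rescale[of "\<lambda>r. g r x" s] that sx by auto
  qed
  ultimately show ?thesis by (rule continuous_on_eq)
qed

lemma deriv_param_int:
  fixes g gx :: "real \<Rightarrow> real \<Rightarrow> real"
  assumes s: "s \<in> {0..1}"
    and dg: "\<And>r x. r \<in> {0..1} \<Longrightarrow> ((\<lambda>x. g r x) has_real_derivative gx r x) (at x)"
    and cg: "continuous_on ({0..1} \<times> UNIV) (\<lambda>(r,x). g r x)"
    and cgx: "continuous_on ({0..1} \<times> UNIV) (\<lambda>(r,x). gx r x)"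
  shows "((\<lambda>x. integral {0..s} (\<lambda>r. g r x)) has_real_derivative integral {0..s} (\<lambda>r. gx r x)) (at x)"
proof -
  have sub: "cbox 0 s \<subseteq> {0..1}" using s by auto
  have "((\<lambda>x. integral (cbox 0 s) (\<lambda>r. g r x)) has_field_derivative integral (cbox 0 s) (\<lambda>r. gx r x)) (at x within UNIV)"
  proof (rule leibniz_rule_field_derivative)
    show "((\<lambda>x. g t x) has_field_derivative gx t x) (at x within UNIV)" if "t \<in> cbox 0 s" for x t
      using dg[of t x] that sub by auto
    show "(\<lambda>r. g r x) integrable_on cbox 0 s" for x
    proof -
      have "continuous_on {0..1} (\<lambda>r. g r x)"
        by (rule continuous_on_compose2[OF cg, where f="\<lambda>r. (r,x)", simplified]) (auto intro!: continuous_intros)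
      then show ?thesis using sub by (auto intro!: integrable_continuous_real intro: continuous_on_subset)
    qed
    show "continuous_on (UNIV \<times> cbox 0 s) (\<lambda>(x, t). gx t x)"
    proof -
      have "continuous_on (UNIV \<times> cbox 0 s) ((\<lambda>(r,x). gx r x) \<circ> (\<lambda>(x,t). (t,x)))"
        by (rule continuous_on_compose[OF _ continuous_on_subset[OF cgx]])
           (use sub in \<open>auto intro!: continuous_intros simp: split_beta\<close>)
      then show ?thesis by (simp add: o_def split_beta)
    qed
  qed auto
  then show ?thesis by simp
qed

lemma cont_slice:
  fixes g :: "real \<Rightarrow> real \<Rightarrow> real"
  assumes cg: "continuous_on ({0..1} \<times> UNIV) (\<lambda>(r,x). g r x)"
  shows "continuous_on {0..1} (\<lambda>r. g r x)"
  by (rule continuous_on_compose2[OF cg, where f="\<lambda>r. (r,x)", simplified]) (auto intro!: continuous_intros)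

lemma deriv_int_s:
  fixes g :: "real \<Rightarrow> real \<Rightarrow> real"
  assumes cg: "continuous_on ({0..1} \<times> UNIV) (\<lambda>(r,x). g r x)" and s: "s \<in> {0..1}"
  shows "((\<lambda>s. integral {0..s} (\<lambda>r. g r x)) has_real_derivative g s x) (at s within {0..1})"
  by (rule integral_has_real_derivative[OF cont_slice[OF cg] s])

lemma lip_from_deriv:
  fixes f f' :: "real \<Rightarrow> real"
  assumes cf: "continuous_on {0..1} f"
    and df: "\<And>s. 0 < s \<Longrightarrow> s < 1 \<Longrightarrow> (f has_real_derivative f' s) (at s)"
    and bf: "\<And>s. 0 < s \<Longrightarrow> s < 1 \<Longrightarrow> \<bar>f' s\<bar> \<le> M"
    and s: "s \<in> {0..1}" and s': "s' \<in> {0..1}"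
  shows "\<bar>f s' - f s\<bar> \<le> M * \<bar>s' - s\<bar>"
proof -
  have main: "\<bar>f v - f u\<bar> \<le> M * \<bar>v - u\<bar>" if uv: "u < v" "u \<in> {0..1}" "v \<in> {0..1}" for u v
  proof -
    have "continuous_on {u..v} f" using cf uv by (auto intro: continuous_on_subset)
    moreover have "f differentiable (at z)" if "u < z" "z < v" for z
    proof -
      have "0 < z" "z < 1" using that uv by auto
      then show ?thesis using df unfolding real_differentiable_def by blast
    qed
    ultimately obtain l z where z: "u < z" "z < v" "DERIV f z :> l" "f v - f u = (v - u) * l"
      using MVT[OF uv(1)] by blast
    have "l = f' z" using DERIV_unique[OF z(3) df] z uv by auto
    then have "\<bar>l\<bar> \<le> M" using bf z uv by auto
    then show ?thesis using z uv by (simp add: abs_mult mult.commute mult_left_mono)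
  qed
  consider "s = s'" | "s < s'" | "s' < s" by linarith
  then show ?thesis
  proof cases
    case 1 then show ?thesis by simp
  next
    case 2 then show ?thesis using main s s' by blast
  next
    case 3 then show ?thesis using main[OF 3 s' s] by (simp add: abs_minus_commute)
  qed
qed

locale odedep =
  fixes h hy hyy Y :: "real \<Rightarrow> real \<Rightarrow> real" and L L2 M :: real
  assumes dh: "\<And>s y. s \<in> {0..1} \<Longrightarrow> (h s has_real_derivative hy s y) (at y)"
    and dhy: "\<And>s y. s \<in> {0..1} \<Longrightarrow> (hy s has_real_derivative hyy s y) (at y)"
    and ch: "continuous_on ({0..1} \<times> UNIV) (\<lambda>(s,y). h s y)"
    and chy: "continuous_on ({0..1} \<times> UNIV) (\<lambda>(s,y). hy s y)"
    and chyy: "continuous_on ({0..1} \<times> UNIV) (\<lambda>(s,y). hyy s y)"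
    and bh: "\<And>s y. s \<in> {0..1} \<Longrightarrow> \<bar>h s y\<bar> \<le> M"
    and bhy: "\<And>s y. s \<in> {0..1} \<Longrightarrow> \<bar>hy s y\<bar> \<le> L"
    and bhyy: "\<And>s y. s \<in> {0..1} \<Longrightarrow> \<bar>hyy s y\<bar> \<le> L2"
    and Yint: "\<And>s x. s \<in> {0..1} \<Longrightarrow> Y s x = x + integral {0..s} (\<lambda>r. h r (Y r x))"
    and Ycs: "\<And>x. continuous_on {0..1} (\<lambda>s. Y s x)"
begin

lemma L_nn: "L \<ge> 0" using bhy[of 0 0] by auto
lemma L2_nn: "L2 \<ge> 0" using bhyy[of 0 0] by auto
lemma M_nn: "M \<ge> 0" using bh[of 0 0] by auto

lemma comp_cont:
  assumes cg: "continuous_on ({0..1} \<times> UNIV) (\<lambda>(s,y). g s y)"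
  shows "continuous_on {0..1} (\<lambda>r. g r (Y r x))"
proof -
  have "continuous_on {0..1} ((\<lambda>(s,y). g s y) \<circ> (\<lambda>r. (r, Y r x)))"
    by (rule continuous_on_compose[OF _ continuous_on_subset[OF cg]])
       (auto intro!: continuous_intros Ycs)
  then show ?thesis by (simp add: o_def)
qed

lemma Y0: "Y 0 x = x" using Yint[of 0 x] by simp

lemma Y_deriv_within:
  assumes s: "s \<in> {0..1}"
  shows "((\<lambda>s. Y s x) has_real_derivative h s (Y s x)) (at s within {0..1})"
proof -
  have "((\<lambda>s. x + integral {0..s} (\<lambda>r. h r (Y r x))) has_real_derivative h s (Y s x)) (at s within {0..1})"
    using integral_has_real_derivative[OF comp_cont[OF ch] s] by (auto intro!: derivative_eq_intros)
  then show ?thesis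
    by (rule has_field_derivative_transform_within[where d=1]) (use s Yint in auto)
qed

lemma Y_deriv_at:
  assumes "0 < s" "s < 1"
  shows "((\<lambda>s. Y s x) has_real_derivative h s (Y s x)) (at s)"
  using Y_deriv_within[of s x] assms by (simp add: at_within_Icc_at)

lemma h_lip:
  assumes "r \<in> {0..1}"
  shows "\<bar>h r y1 - h r y2\<bar> \<le> L * \<bar>y1 - y2\<bar>"
proof -
  obtain z where "h r y1 - h r y2 = (y1 - y2) * hy r z"
    using mvt_between[of y2 y1 "h r" "hy r"] dh[OF assms] by blast
  moreover have "\<bar>hy r z\<bar> * \<bar>y1 - y2\<bar> \<le> L * \<bar>y1 - y2\<bar>"
    using bhy[OF assms, of z] by (rule mult_right_mono) auto
  ultimately show ?thesis by (simp add: abs_mult mult.commute)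
qed

lemma hy_lip:
  assumes "r \<in> {0..1}"
  shows "\<bar>hy r y1 - hy r y2\<bar> \<le> L2 * \<bar>y1 - y2\<bar>"
proof -
  obtain z where "hy r y1 - hy r y2 = (y1 - y2) * hyy r z"
    using mvt_between[of y2 y1 "hy r" "hyy r"] dhy[OF assms] by blast
  moreover have "\<bar>hyy r z\<bar> * \<bar>y1 - y2\<bar> \<le> L2 * \<bar>y1 - y2\<bar>"
    using bhyy[OF assms, of z] by (rule mult_right_mono) auto
  ultimately show ?thesis by (simp add: abs_mult mult.commute)
qed

lemma h_taylor:
  assumes r: "r \<in> {0..1}"
  shows "\<bar>h r y1 - h r y2 - hy r y2 * (y1 - y2)\<bar> \<le> L2 * (y1 - y2)^2"
proof -
  obtain z where z: "\<bar>z - y2\<bar> \<le> \<bar>y1 - y2\<bar>" and eq: "h r y1 - h r y2 = (y1 - y2) * hy r z"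
    using mvt_between[of y2 y1 "h r" "hy r"] dh[OF r] by blast
  have "\<bar>h r y1 - h r y2 - hy r y2 * (y1 - y2)\<bar> = \<bar>y1 - y2\<bar> * \<bar>hy r z - hy r y2\<bar>"
    by (simp add: eq abs_mult flip: right_diff_distrib' abs_mult) (simp add: algebra_simps)
  also have "\<dots> \<le> \<bar>y1 - y2\<bar> * (L2 * \<bar>y1 - y2\<bar>)"
    using hy_lip[OF r, of z y2] z L2_nn by (intro mult_left_mono) (auto intro: order.trans mult_left_mono)
  also have "\<dots> = L2 * (y1 - y2)^2" by (simp add: power2_eq_square algebra_simps)
  finally show ?thesis .
qed

definition "C = exp (2*L+1)"

lemma C_pos: "C > 0" by (simp add: C_def)

lemma Y_lip_sq:
  assumes s: "s \<in> {0..1}"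
  shows "(Y s x1 - Y s x2)^2 \<le> (x1 - x2)^2 * C"
proof -
  have "(Y s x1 - Y s x2)^2 \<le> ((Y 0 x1 - Y 0 x2)^2 + 0^2 * s) * exp ((2*L+1)* s)"
  proof (rule gronwall_sq[where f'="\<lambda>r. h r (Y r x1) - h r (Y r x2)" and L=L])
    show "continuous_on {0..s} (\<lambda>r. Y r x1 - Y r x2)"
      using s by (auto intro!: continuous_intros intro: continuous_on_subset[OF Ycs])
    show "((\<lambda>r. Y r x1 - Y r x2) has_real_derivative h r (Y r x1) - h r (Y r x2)) (at r)"
      if "0 < r" "r < s" for r
      using that s by (auto intro!: derivative_eq_intros Y_deriv_at)
    show "\<bar>h r (Y r x1) - h r (Y r x2)\<bar> \<le> L * \<bar>Y r x1 - Y r x2\<bar> + 0" if "0 < r" "r < s" for r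
      using h_lip[of r] that s by auto
  qed (use L_nn s in auto)
  also have "\<dots> \<le> (x1 - x2)^2 * C"
    using s L_nn by (auto simp: Y0 C_def intro!: mult_left_mono)
  finally show ?thesis .
qed

definition "K = sqrt C"

lemma Y_lip:
  assumes s: "s \<in> {0..1}"
  shows "\<bar>Y s x1 - Y s x2\<bar> \<le> K * \<bar>x1 - x2\<bar>"
proof -
  have "sqrt ((Y s x1 - Y s x2)^2) \<le> sqrt ((x1 - x2)^2 * C)"
    using Y_lip_sq[OF s] by (rule real_sqrt_le_mono)
  then show ?thesis by (simp add: K_def real_sqrt_mult mult.commute)
qed

lemma K_nn: "K \<ge> 0" by (simp add: K_def C_pos less_imp_le)

lemma Y_lip_s:
  assumes "s \<in> {0..1}" "s' \<in> {0..1}"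
  shows "\<bar>Y s' x - Y s x\<bar> \<le> M * \<bar>s' - s\<bar>"
  by (rule lip_from_deriv[OF Ycs Y_deriv_at _ assms]) (auto intro: bh)

lemma Y_cont: "continuous_on ({0..1} \<times> UNIV) (\<lambda>(s,x). Y s x)"
  unfolding continuous_on_iff
proof (intro ballI allI impI)
  fix p :: "real \<times> real" and e :: real assume p: "p \<in> {0..1} \<times> UNIV" and e: "e > 0"
  obtain s x where px: "p = (s,x)" by (cases p)
  define d where "d = e / (K + M + 1)"
  have d: "d > 0" using e K_nn M_nn by (simp add: d_def)
  show "\<exists>d>0. \<forall>q\<in>{0..1} \<times> UNIV. dist q p < d \<longrightarrow> dist ((\<lambda>(s,x). Y s x) q) ((\<lambda>(s,x). Y s x) p) < e"
  proof (intro exI[of _ d] conjI ballI impI d)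
    fix q :: "real \<times> real" assume q: "q \<in> {0..1} \<times> UNIV" and dq: "dist q p < d"
    obtain s' x' where qx: "q = (s',x')" by (cases q)
    have s: "s \<in> {0..1}" and s': "s' \<in> {0..1}" using p q px qx by auto
    have ds: "\<bar>s' - s\<bar> \<le> dist q p" and dx: "\<bar>x' - x\<bar> \<le> dist q p"
      using px qx by (auto simp: dist_Pair_Pair dist_real_def)
    have "\<bar>Y s' x' - Y s x\<bar> \<le> \<bar>Y s' x' - Y s' x\<bar> + \<bar>Y s' x - Y s x\<bar>" by linarith
    also have "\<dots> \<le> K * \<bar>x' - x\<bar> + M * \<bar>s' - s\<bar>"
      using Y_lip[OF s'] Y_lip_s[OF s s'] by (intro add_mono) auto
    also have "\<dots> \<le> K * dist q p + M * dist q p"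
      using ds dx K_nn M_nn by (intro add_mono mult_left_mono) auto
    also have "\<dots> \<le> (K + M + 1) * dist q p" by (simp add: algebra_simps)
    also have "\<dots> < (K + M + 1) * d" using dq K_nn M_nn by (intro mult_strict_left_mono) auto
    also have "\<dots> = e" using K_nn M_nn by (simp add: d_def)
    finally show "dist ((\<lambda>(s,x). Y s x) q) ((\<lambda>(s,x). Y s x) p) < e"
      using px qx by (simp add: dist_real_def)
  qed
qed

lemma comp_cont2:
  assumes cg: "continuous_on ({0..1} \<times> UNIV) (\<lambda>(s,y). g s y)"
  shows "continuous_on ({0..1} \<times> UNIV) (\<lambda>(r,x). g r (Y r x))"
proof -
  have "continuous_on ({0..1} \<times> UNIV) ((\<lambda>(s,y). g s y) \<circ> (\<lambda>(r,x). (r, Y r x)))"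
  proof (rule continuous_on_compose[OF _ continuous_on_subset[OF cg]])
    show "continuous_on ({0..1} \<times> UNIV) (\<lambda>(r, x). (r, Y r x))"
      using Y_cont by (auto intro!: continuous_intros simp: split_beta)
  qed auto
  then show ?thesis by (simp add: o_def split_beta)
qed

definition "A s x = integral {0..s} (\<lambda>r. hy r (Y r x))"
definition "E s x = exp (A s x)"

lemma A_cont: "continuous_on ({0..1} \<times> UNIV) (\<lambda>(s,x). A s x)"
  unfolding A_def by (rule cont_param_int[OF comp_cont2[OF chy]])

lemma E_cont: "continuous_on ({0..1} \<times> UNIV) (\<lambda>(s,x). E s x)"
  unfolding E_def using A_cont by (auto intro!: continuous_intros simp: split_beta)

lemma E_cs: "continuous_on {0..1} (\<lambda>s. E s x)"
  using cont_slice[OF E_cont] by simp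

lemma E0: "E 0 x = 1" by (simp add: E_def A_def)

lemma E_deriv_within:
  assumes s: "s \<in> {0..1}"
  shows "((\<lambda>s. E s x) has_real_derivative hy s (Y s x) * E s x) (at s within {0..1})"
  unfolding E_def A_def
  using integral_has_real_derivative[OF comp_cont[OF chy] s]
  by (auto intro!: derivative_eq_intros)

lemma E_deriv_at:
  assumes "0 < s" "s < 1"
  shows "((\<lambda>s. E s x) has_real_derivative hy s (Y s x) * E s x) (at s)"
  using E_deriv_within[of s x] assms by (simp add: at_within_Icc_at)

definition "B = L2 * C * K"

lemma Y_lin_bound:
  assumes s: "s \<in> {0..1}"
  shows "\<bar>Y s x' - Y s x - E s x * (x' - x)\<bar> \<le> B * (x' - x)^2"
proof -
  define eps where "eps = L2 * C * (x' - x)^2"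
  have eps: "eps \<ge> 0" using L2_nn C_pos by (simp add: eps_def)
  have "(Y s x' - Y s x - (x' - x) * E s x)^2 \<le> ((Y 0 x' - Y 0 x - (x' - x) * E 0 x)^2 + eps^2 * s) * exp ((2*L+1)* s)"
  proof (rule gronwall_sq[where f'="\<lambda>r. h r (Y r x') - h r (Y r x) - (x' - x) * (hy r (Y r x) * E r x)" and L=L])
    show "continuous_on {0..s} (\<lambda>r. Y r x' - Y r x - (x' - x) * E r x)"
      using s by (auto intro!: continuous_intros intro: continuous_on_subset[OF Ycs] continuous_on_subset[OF E_cs])
    show "((\<lambda>r. Y r x' - Y r x - (x' - x) * E r x) has_real_derivative
           h r (Y r x') - h r (Y r x) - (x' - x) * (hy r (Y r x) * E r x)) (at r)"
      if "0 < r" "r < s" for r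
      using that s by (auto intro!: derivative_eq_intros Y_deriv_at E_deriv_at)
    show "\<bar>h r (Y r x') - h r (Y r x) - (x' - x) * (hy r (Y r x) * E r x)\<bar>
          \<le> L * \<bar>Y r x' - Y r x - (x' - x) * E r x\<bar> + eps" if "0 < r" "r < s" for r
    proof -
      have r: "r \<in> {0..1}" using that s by auto
      have "h r (Y r x') - h r (Y r x) - (x' - x) * (hy r (Y r x) * E r x)
            = (h r (Y r x') - h r (Y r x) - hy r (Y r x) * (Y r x' - Y r x))
              + hy r (Y r x) * (Y r x' - Y r x - (x' - x) * E r x)"
        by (simp add: algebra_simps)
      moreover have "\<bar>h r (Y r x') - h r (Y r x) - hy r (Y r x) * (Y r x' - Y r x)\<bar> \<le> eps"
      proof -
        have "\<bar>h r (Y r x') - h r (Y r x) - hy r (Y r x) * (Y r x' - Y r x)\<bar> \<le> L2 * (Y r x' - Y r x)^2"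
          by (rule h_taylor[OF r])
        also have "\<dots> \<le> L2 * ((x' - x)^2 * C)"
          using Y_lip_sq[OF r, of x' x] L2_nn by (intro mult_left_mono) auto
        finally show ?thesis by (simp add: eps_def algebra_simps)
      qed
      moreover have "\<bar>hy r (Y r x) * (Y r x' - Y r x - (x' - x) * E r x)\<bar> \<le> L * \<bar>Y r x' - Y r x - (x' - x) * E r x\<bar>"
        using bhy[OF r] by (simp add: abs_mult mult_right_mono)
      ultimately show ?thesis by linarith
    qed
  qed (use L_nn s eps in auto)
  also have "\<dots> = eps^2 * s * exp ((2*L+1)* s)" by (simp add: Y0 E0)
  also have "\<dots> \<le> eps^2 * 1 * C"
    using s L_nn by (auto simp: C_def mult_left_le intro!: mult_mono)
  finally have sq: "(Y s x' - Y s x - (x' - x) * E s x)^2 \<le> (eps * K)^2"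
    by (simp add: K_def power_mult_distrib C_pos less_imp_le)
  have "\<bar>Y s x' - Y s x - (x' - x) * E s x\<bar> \<le> \<bar>eps * K\<bar>"
    using sq by (simp add: abs_le_square_iff)
  moreover have "\<bar>eps * K\<bar> = B * (x' - x)^2" using eps K_nn by (simp add: B_def eps_def)
  ultimately show ?thesis by (simp add: mult.commute)
qed

lemma B_nn: "B \<ge> 0" using L2_nn C_pos K_nn by (simp add: B_def)

lemma Y_deriv_x:
  assumes s: "s \<in> {0..1}"
  shows "((\<lambda>x. Y s x) has_real_derivative E s x) (at x)"
  unfolding has_field_derivative_def has_derivative_within_alt
proof (intro conjI allI impI)
  show "bounded_linear ((*) (E s x))" by (rule bounded_linear_mult_right)
  fix e :: real assume e: "e > 0"
  define d where "d = e / (B + 1)"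
  have d: "d > 0" using e B_nn by (simp add: d_def)
  have "norm (Y s y - Y s x - E s x * (y - x)) \<le> e * norm (y - x)" if "norm (y - x) < d" for y
  proof -
    have "\<bar>Y s y - Y s x - E s x * (y - x)\<bar> \<le> B * (y - x)^2" by (rule Y_lin_bound[OF s])
    also have "\<dots> = (B * \<bar>y - x\<bar>) * \<bar>y - x\<bar>" by (simp add: power2_eq_square)
    also have "\<dots> \<le> e * \<bar>y - x\<bar>"
    proof (rule mult_right_mono)
      have "B * \<bar>y - x\<bar> \<le> (B + 1) * d"
        using that B_nn by (intro mult_mono) auto
      then show "B * \<bar>y - x\<bar> \<le> e" using B_nn by (simp add: d_def)
    qed auto
    finally show ?thesis by simp
  qed
  then show "\<exists>d>0. \<forall>y\<in>UNIV. norm (y - x) < d \<longrightarrow> norm (Y s y - Y s x - E s x * (y - x)) \<le> e * norm (y - x)"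
    using d by blast
qed

definition "Edx s x = E s x * integral {0..s} (\<lambda>r. hyy r (Y r x) * E r x)"

lemma hyyE_cont: "continuous_on ({0..1} \<times> UNIV) (\<lambda>(r,x). hyy r (Y r x) * E r x)"
  using comp_cont2[OF chyy] E_cont by (auto intro!: continuous_intros simp: split_beta)

lemma Edx_cont: "continuous_on ({0..1} \<times> UNIV) (\<lambda>(s,x). Edx s x)"
  unfolding Edx_def using cont_param_int[OF hyyE_cont] E_cont
  by (auto intro!: continuous_intros simp: split_beta)

lemma E_deriv_x:
  assumes s: "s \<in> {0..1}"
  shows "((\<lambda>x. E s x) has_real_derivative Edx s x) (at x)"
proof -
  have "((\<lambda>x. A s x) has_real_derivative integral {0..s} (\<lambda>r. hyy r (Y r x) * E r x)) (at x)"
    unfolding A_def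
  proof (rule deriv_param_int[OF s])
    show "((\<lambda>x. hy r (Y r x)) has_real_derivative hyy r (Y r x) * E r x) (at x)" if "r \<in> {0..1}" for r x
      using DERIV_chain2[OF dhy[OF that] Y_deriv_x[OF that]] .
    show "continuous_on ({0..1} \<times> UNIV) (\<lambda>(r, x). hy r (Y r x))" by (rule comp_cont2[OF chy])
    show "continuous_on ({0..1} \<times> UNIV) (\<lambda>(r, x). hyy r (Y r x) * E r x)" by (rule hyyE_cont)
  qed
  then show ?thesis unfolding E_def Edx_def
    by (auto intro!: derivative_eq_intros)
qed

end

locale odedepT = odedep +
  fixes k ky kyy F :: "real \<Rightarrow> real \<Rightarrow> real"
  assumes dk: "\<And>s y. s \<in> {0..1} \<Longrightarrow> (k s has_real_derivative ky s y) (at y)"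
    and dky: "\<And>s y. s \<in> {0..1} \<Longrightarrow> (ky s has_real_derivative kyy s y) (at y)"
    and ck: "continuous_on ({0..1} \<times> UNIV) (\<lambda>(s,y). k s y)"
    and cky: "continuous_on ({0..1} \<times> UNIV) (\<lambda>(s,y). ky s y)"
    and ckyy: "continuous_on ({0..1} \<times> UNIV) (\<lambda>(s,y). kyy s y)"
    and dF: "\<And>s x. s \<in> {0..1} \<Longrightarrow> ((\<lambda>s. k s (Y s x)) has_real_derivative F s x) (at s within {0..1})"
    and cF: "continuous_on ({0..1} \<times> UNIV) (\<lambda>(s,x). F s x)"
begin

definition "T s x = integral {0..s} (\<lambda>r. k r (Y r x))"
definition "Tx s x = integral {0..s} (\<lambda>r. ky r (Y r x) * E r x)"
definition "Txx s x = integral {0..s} (\<lambda>r. kyy r (Y r x) * E r x * E r x + ky r (Y r x) * Edx r x)"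

lemma kyE_cont: "continuous_on ({0..1} \<times> UNIV) (\<lambda>(r,x). ky r (Y r x) * E r x)"
  using comp_cont2[OF cky] E_cont by (auto intro!: continuous_intros simp: split_beta)

lemma kyy_cont: "continuous_on ({0..1} \<times> UNIV) (\<lambda>(r,x). kyy r (Y r x) * E r x * E r x + ky r (Y r x) * Edx r x)"
  using comp_cont2[OF ckyy] comp_cont2[OF cky] E_cont Edx_cont
  by (auto intro!: continuous_intros simp: split_beta)

lemma kY_dx: "r \<in> {0..1} \<Longrightarrow> ((\<lambda>x. k r (Y r x)) has_real_derivative ky r (Y r x) * E r x) (at x)"
  using DERIV_chain2[OF dk Y_deriv_x] by blast

lemma kyE_dx: "r \<in> {0..1} \<Longrightarrow> ((\<lambda>x. ky r (Y r x) * E r x) has_real_derivative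
     kyy r (Y r x) * E r x * E r x + ky r (Y r x) * Edx r x) (at x)"
  using DERIV_mult[OF DERIV_chain2[OF dky Y_deriv_x] E_deriv_x] by (simp add: algebra_simps)

lemma T_C2:
  assumes U: "open U"
  shows "C2_on ({0..1} \<times> U) (\<lambda>(s,x). T s x)"
  unfolding C2_on_def
proof (intro exI conjI ballI)
  let ?S = "{0..1} \<times> U"
  fix p :: "real \<times> real" assume p: "p \<in> ?S"
  show "((\<lambda>(s,x). T s x) has_derivative (\<lambda>h. (\<lambda>(s,x). k s (Y s x)) p * fst h + (\<lambda>(s,x). Tx s x) p * snd h)) (at p within ?S)"
  proof (rule partials_deriv[OF U _ _ _ p])
    show "((\<lambda>s. (\<lambda>(s,x). T s x) (s, x)) has_real_derivative (\<lambda>(s,x). k s (Y s x)) (s, x)) (at s within {0..1})"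
      if "s \<in> {0..1}" for s x
      using deriv_int_s[OF comp_cont2[OF ck] that] by (simp add: T_def)
    show "((\<lambda>x. (\<lambda>(s,x). T s x) (s, x)) has_real_derivative (\<lambda>(s,x). Tx s x) (s, x)) (at x)"
      if "s \<in> {0..1}" for s x
      using deriv_param_int[OF that kY_dx comp_cont2[OF ck] kyE_cont] by (simp add: T_def Tx_def)
    show "continuous_on ?S (\<lambda>(s,x). Tx s x)"
      unfolding Tx_def by (rule continuous_on_subset[OF cont_param_int[OF kyE_cont]]) auto
  qed
  show "((\<lambda>(s,x). k s (Y s x)) has_derivative (\<lambda>h. (\<lambda>(s,x). F s x) p * fst h + (\<lambda>(s,x). ky s (Y s x) * E s x) p * snd h)) (at p within ?S)"
  proof (rule partials_deriv[OF U _ _ _ p])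
    show "((\<lambda>s. (\<lambda>(s,x). k s (Y s x)) (s, x)) has_real_derivative (\<lambda>(s,x). F s x) (s, x)) (at s within {0..1})"
      if "s \<in> {0..1}" for s x
      using dF[OF that] by simp
    show "((\<lambda>x. (\<lambda>(s,x). k s (Y s x)) (s, x)) has_real_derivative (\<lambda>(s,x). ky s (Y s x) * E s x) (s, x)) (at x)"
      if "s \<in> {0..1}" for s x
      using kY_dx[OF that] by simp
    show "continuous_on ?S (\<lambda>(s,x). ky s (Y s x) * E s x)"
      by (rule continuous_on_subset[OF kyE_cont]) auto
  qed
  show "((\<lambda>(s,x). Tx s x) has_derivative (\<lambda>h. (\<lambda>(s,x). ky s (Y s x) * E s x) p * fst h + (\<lambda>(s,x). Txx s x) p * snd h)) (at p within ?S)"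
  proof (rule partials_deriv[OF U _ _ _ p])
    show "((\<lambda>s. (\<lambda>(s,x). Tx s x) (s, x)) has_real_derivative (\<lambda>(s,x). ky s (Y s x) * E s x) (s, x)) (at s within {0..1})"
      if "s \<in> {0..1}" for s x
      using deriv_int_s[OF kyE_cont that] by (simp add: Tx_def)
    show "((\<lambda>x. (\<lambda>(s,x). Tx s x) (s, x)) has_real_derivative (\<lambda>(s,x). Txx s x) (s, x)) (at x)"
      if "s \<in> {0..1}" for s x
      using deriv_param_int[OF that kyE_dx kyE_cont kyy_cont] by (simp add: Tx_def Txx_def)
    show "continuous_on ?S (\<lambda>(s,x). Txx s x)"
      unfolding Txx_def by (rule continuous_on_subset[OF cont_param_int[OF kyy_cont]]) auto
  qed
next
  show "continuous_on ({0..1} \<times> U) (\<lambda>(s,x). F s x)"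
    by (rule continuous_on_subset[OF cF]) auto
  show "continuous_on ({0..1} \<times> U) (\<lambda>(s,x). ky s (Y s x) * E s x)"
    by (rule continuous_on_subset[OF kyE_cont]) auto
  show "continuous_on ({0..1} \<times> U) (\<lambda>(s,x). ky s (Y s x) * E s x)"
    by (rule continuous_on_subset[OF kyE_cont]) auto
  show "continuous_on ({0..1} \<times> U) (\<lambda>(s,x). Txx s x)"
    unfolding Txx_def by (rule continuous_on_subset[OF cont_param_int[OF kyy_cont]]) auto
qed

end

definition Q :: "real \<Rightarrow> real" where "Q v = v / (1 + v^2)"
definition Q1 :: "real \<Rightarrow> real" where "Q1 v = (1 - v^2) / (1 + v^2)^2"
definition Q2 :: "real \<Rightarrow> real" where "Q2 v = (2 * v^3 - 6 * v) / (1 + v^2)^3"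
definition R :: "real \<Rightarrow> real" where "R v = 1 / (1 + v^2)"
definition R1 :: "real \<Rightarrow> real" where "R1 v = - 2 * v / (1 + v^2)^2"
definition R2 :: "real \<Rightarrow> real" where "R2 v = (6 * v^2 - 2) / (1 + v^2)^3"

lemma pos1: "1 + (v::real)^2 > 0" by (simp add: add_pos_nonneg)
lemma nz1: "1 + (v::real)^2 \<noteq> 0" using pos1[of v] by linarith
lemma nz2: "1 + (v::real) * v \<noteq> 0" using nz1[of v] by (simp add: power2_eq_square)

lemma dQ: "(Q has_real_derivative Q1 v) (at v)"
  unfolding Q_def[abs_def] Q1_def
  by (rule derivative_eq_intros refl | simp add: nz1)+ (simp only: power2_eq_square; simp add: divide_simps nz2; algebra)
lemma dQ1: "(Q1 has_real_derivative Q2 v) (at v)"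
  unfolding Q1_def[abs_def] Q2_def
  by (rule derivative_eq_intros refl | simp add: nz1)+ (simp add: divide_simps nz1 nz2, algebra)
lemma dR: "(R has_real_derivative R1 v) (at v)"
  unfolding R_def[abs_def] R1_def
  by (rule derivative_eq_intros refl | simp add: nz1)+ (simp only: power2_eq_square; simp add: divide_simps nz2; algebra)
lemma dR1: "(R1 has_real_derivative R2 v) (at v)"
  unfolding R1_def[abs_def] R2_def
  by (rule derivative_eq_intros refl | simp add: nz1)+ (simp add: divide_simps nz1 nz2, algebra)

lemma cQ: "continuous_on UNIV Q" and cQ1: "continuous_on UNIV Q1" and cQ2: "continuous_on UNIV Q2"
  and cR: "continuous_on UNIV R" and cR1: "continuous_on UNIV R1" and cR2: "continuous_on UNIV R2"
  unfolding Q_def[abs_def] Q1_def[abs_def] Q2_def[abs_def] R_def[abs_def] R1_def[abs_def] R2_def[abs_def]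
  by (auto intro!: continuous_intros simp: nz1)

lemma bounded_outside:
  fixes g :: "real \<Rightarrow> real \<Rightarrow> real"
  assumes cg: "continuous_on ({0..1} \<times> UNIV) (\<lambda>(s,y). g s y)"
    and z: "\<And>s y. y \<notin> {a..b} \<Longrightarrow> g s y = 0"
  shows "\<exists>M. \<forall>s\<in>{0..1}. \<forall>y. \<bar>g s y\<bar> \<le> M"
proof -
  have "compact ((\<lambda>(s,y). g s y) ` ({0..1} \<times> {a..b}))"
    by (rule compact_continuous_image[OF continuous_on_subset[OF cg]]) (auto intro: compact_Times)
  then obtain M where M: "\<And>v. v \<in> (\<lambda>(s,y). g s y) ` ({0..1} \<times> {a..b}) \<Longrightarrow> norm v \<le> M"
    using compact_imp_bounded bounded_iff by metis
  have "\<bar>g s y\<bar> \<le> max M 0" if "s \<in> {0..1}" for s y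
  proof (cases "y \<in> {a..b}")
    case True then show ?thesis using M[of "g s y"] that by force
  next
    case False then show ?thesis using z by simp
  qed
  then show ?thesis by blast
qed

locale setting =
  fixes w :: "real \<Rightarrow> real" and p :: "real poly" and a b :: real
    and \<xi> \<eta> :: "real \<Rightarrow> real \<Rightarrow> real"
  assumes w_C3: "C3 w"
    and ab: "a < b"
    and p_a: "\<forall>k\<le>3. poly ((pderiv ^^ k) p) a = 0"
    and p_b: "\<forall>k\<le>3. poly ((pderiv ^^ k) p) b = 0"
    and ode_\<xi>: "\<forall>x t. ((\<lambda>t. \<xi> t x) has_real_derivative
        (- deriv w (\<xi> t x) * bump p a b (\<xi> t x)
         - (\<eta> t x - w (\<xi> t x)) * deriv (bump p a b) (\<xi> t x))) (at t)"
    and ode_\<eta>: "\<forall>x t. ((\<lambda>t. \<eta> t x) has_real_derivative bump p a b (\<xi> t x)) (at t)"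
    and init: "\<forall>x. \<xi> 0 x = x \<and> \<eta> 0 x = w x"
begin

definition "P0 = bump p a b"
definition "P1 = bump (pderiv p) a b"
definition "P2 = bump ((pderiv^^2) p) a b"
definition "P3 = bump ((pderiv^^3) p) a b"
definition "W1 = deriv w"
definition "W2 = deriv W1"
definition "W3 = deriv W2"

lemma dP0: "(P0 has_real_derivative P1 y) (at y)"
proof -
  have "poly p a = 0" "poly (pderiv p) a = 0" "poly p b = 0" "poly (pderiv p) b = 0"
    using p_a[rule_format, of 0] p_a[rule_format, of 1] p_b[rule_format, of 0] p_b[rule_format, of 1] by auto
  then show ?thesis unfolding P0_def P1_def
    using bump_deriv[OF ab, of p] by simp
qed

lemma dP1: "(P1 has_real_derivative P2 y) (at y)"
proof -
  have "poly (pderiv p) a = 0" "poly (pderiv (pderiv p)) a = 0"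
       "poly (pderiv p) b = 0" "poly (pderiv (pderiv p)) b = 0"
    using p_a[rule_format, of 1] p_a[rule_format, of 2] p_b[rule_format, of 1] p_b[rule_format, of 2]
    by (auto simp: numeral_2_eq_2)
  then show ?thesis unfolding P1_def P2_def
    using bump_deriv[OF ab, of "pderiv p"] by (simp add: numeral_2_eq_2)
qed

lemma dP2: "(P2 has_real_derivative P3 y) (at y)"
proof -
  have "poly ((pderiv^^2) p) a = 0" "poly ((pderiv^^3) p) a = 0"
       "poly ((pderiv^^2) p) b = 0" "poly ((pderiv^^3) p) b = 0" using p_a p_b by auto
  then show ?thesis unfolding P2_def P3_def
    using bump_deriv[OF ab, of "(pderiv^^2) p"] by (simp add: numeral_3_eq_3 numeral_2_eq_2)
qed

lemma cP3: "continuous_on UNIV P3"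
  unfolding P3_def using p_a p_b by (intro bump_cont[OF ab]) auto

lemma P_out: "y \<notin> {a..b} \<Longrightarrow> P0 y = 0 \<and> P1 y = 0 \<and> P2 y = 0 \<and> P3 y = 0"
  by (auto simp: P0_def P1_def P2_def P3_def bump_def)

lemma deriv_P0: "deriv (bump p a b) = P1"
  using dP0 by (auto simp: P0_def intro!: ext DERIV_imp_deriv)

lemma C3D: "\<forall>k<3. \<forall>x. ((deriv ^^ k) w) differentiable (at x)"
  using w_C3 unfolding C3_def by blast

lemma dW0: "(w has_real_derivative W1 y) (at y)"
proof -
  have "w differentiable (at y)" using C3D[rule_format, of 0 y] by simp
  then show ?thesis unfolding W1_def by (simp add: DERIV_deriv_iff_real_differentiable)
qed

lemma dW1: "(W1 has_real_derivative W2 y) (at y)"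
proof -
  have "(deriv w) differentiable (at y)" using C3D[rule_format, of 1 y] by simp
  then show ?thesis unfolding W1_def W2_def by (simp add: DERIV_deriv_iff_real_differentiable)
qed

lemma dW2: "(W2 has_real_derivative W3 y) (at y)"
proof -
  have "(deriv (deriv w)) differentiable (at y)" using C3D[rule_format, of 2 y] by (simp add: numeral_2_eq_2)
  then show ?thesis unfolding W1_def W2_def W3_def
    by (simp add: DERIV_deriv_iff_real_differentiable)
qed

lemma cW3: "continuous_on UNIV W3"
  using w_C3 unfolding C3_def W1_def W2_def W3_def by (simp add: numeral_3_eq_3)

lemma cP0: "continuous_on UNIV P0" and cP1: "continuous_on UNIV P1" and cP2: "continuous_on UNIV P2"
  and cW1: "continuous_on UNIV W1" and cW2: "continuous_on UNIV W2" and cw: "continuous_on UNIV w"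
  using dP0 dP1 dP2 dW0 dW1 dW2
  by (auto intro!: continuous_at_imp_continuous_on DERIV_isCont)

lemmas cbase = cP0 cP1 cP2 cP3 cW1 cW2 cW3 cw cQ cQ1 cQ2 cR cR1 cR2

lemma ccomp[continuous_intros]:
  "continuous_on S f \<Longrightarrow> continuous_on S (\<lambda>x. P0 (f x))"
  "continuous_on S f \<Longrightarrow> continuous_on S (\<lambda>x. P1 (f x))"
  "continuous_on S f \<Longrightarrow> continuous_on S (\<lambda>x. P2 (f x))"
  "continuous_on S f \<Longrightarrow> continuous_on S (\<lambda>x. P3 (f x))"
  "continuous_on S f \<Longrightarrow> continuous_on S (\<lambda>x. W1 (f x))"
  "continuous_on S f \<Longrightarrow> continuous_on S (\<lambda>x. W2 (f x))"
  "continuous_on S f \<Longrightarrow> continuous_on S (\<lambda>x. W3 (f x))"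
  "continuous_on S f \<Longrightarrow> continuous_on S (\<lambda>x. w (f x))"
  "continuous_on S f \<Longrightarrow> continuous_on S (\<lambda>x. Q (f x))"
  "continuous_on S f \<Longrightarrow> continuous_on S (\<lambda>x. Q1 (f x))"
  "continuous_on S f \<Longrightarrow> continuous_on S (\<lambda>x. Q2 (f x))"
  "continuous_on S f \<Longrightarrow> continuous_on S (\<lambda>x. R (f x))"
  "continuous_on S f \<Longrightarrow> continuous_on S (\<lambda>x. R1 (f x))"
  "continuous_on S f \<Longrightarrow> continuous_on S (\<lambda>x. R2 (f x))"
  by (auto intro: continuous_on_compose2[OF cbase(1)] continuous_on_compose2[OF cbase(2)]
      continuous_on_compose2[OF cbase(3)] continuous_on_compose2[OF cbase(4)]
      continuous_on_compose2[OF cbase(5)] continuous_on_compose2[OF cbase(6)]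
      continuous_on_compose2[OF cbase(7)] continuous_on_compose2[OF cbase(8)]
      continuous_on_compose2[OF cbase(9)] continuous_on_compose2[OF cbase(10)]
      continuous_on_compose2[OF cbase(11)] continuous_on_compose2[OF cbase(12)]
      continuous_on_compose2[OF cbase(13)] continuous_on_compose2[OF cbase(14)])

definition "z s y = W1 y + s * P1 y"
definition "zy s y = W2 y + s * P2 y"
definition "zyy s y = W3 y + s * P3 y"
definition "h s y = - (P0 y * Q (z s y))"
definition "hy s y = - (P1 y * Q (z s y) + P0 y * (Q1 (z s y) * zy s y))"
definition "hyy s y = - (P2 y * Q (z s y) + P1 y * (Q1 (z s y) * zy s y)
     + (P1 y * (Q1 (z s y) * zy s y) + P0 y * (Q2 (z s y) * zy s y * zy s y + Q1 (z s y) * zyy s y)))"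
definition "k s y = R (z s y)"
definition "ky s y = R1 (z s y) * zy s y"
definition "kyy s y = R2 (z s y) * zy s y * zy s y + R1 (z s y) * zyy s y"

lemma dz: "(z s has_real_derivative zy s y) (at y)"
  unfolding z_def[abs_def] zy_def by (auto intro!: derivative_eq_intros dW1 dP1)
lemma dzy: "(zy s has_real_derivative zyy s y) (at y)"
  unfolding zy_def[abs_def] zyy_def by (auto intro!: derivative_eq_intros dW2 dP2)

lemma dh: "(h s has_real_derivative hy s y) (at y)"
proof -
  have "((\<lambda>y. P0 y * Q (z s y)) has_real_derivative P1 y * Q (z s y) + P0 y * (Q1 (z s y) * zy s y)) (at y)"
    using DERIV_mult[OF dP0 DERIV_chain2[OF dQ dz]] by (simp add: algebra_simps)
  from DERIV_minus[OF this] show ?thesis unfolding h_def[abs_def] hy_def by simp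
qed

lemma dhy: "(hy s has_real_derivative hyy s y) (at y)"
proof -
  have 1: "((\<lambda>y. P1 y * Q (z s y)) has_real_derivative P2 y * Q (z s y) + P1 y * (Q1 (z s y) * zy s y)) (at y)"
    using DERIV_mult[OF dP1 DERIV_chain2[OF dQ dz]] by (simp add: algebra_simps)
  have 2: "((\<lambda>y. Q1 (z s y) * zy s y) has_real_derivative Q2 (z s y) * zy s y * zy s y + Q1 (z s y) * zyy s y) (at y)"
    using DERIV_mult[OF DERIV_chain2[OF dQ1 dz] dzy] by (simp add: algebra_simps)
  have 3: "((\<lambda>y. P0 y * (Q1 (z s y) * zy s y)) has_real_derivative
       P1 y * (Q1 (z s y) * zy s y) + P0 y * (Q2 (z s y) * zy s y * zy s y + Q1 (z s y) * zyy s y)) (at y)"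
    using DERIV_mult[OF dP0 2] by (simp add: algebra_simps)
  from DERIV_minus[OF DERIV_add[OF 1 3]] show ?thesis unfolding hy_def[abs_def] hyy_def by simp
qed

lemma dk: "(k s has_real_derivative ky s y) (at y)"
  unfolding k_def[abs_def] ky_def using DERIV_chain2[OF dR dz] by simp

lemma dky: "(ky s has_real_derivative kyy s y) (at y)"
  unfolding ky_def[abs_def] kyy_def
  using DERIV_mult[OF DERIV_chain2[OF dR1 dz] dzy] by (simp add: algebra_simps)

lemma ch: "continuous_on ({0..1} \<times> UNIV) (\<lambda>(s,y). h s y)"
  and chy: "continuous_on ({0..1} \<times> UNIV) (\<lambda>(s,y). hy s y)"
  and chyy: "continuous_on ({0..1} \<times> UNIV) (\<lambda>(s,y). hyy s y)"
  and ck: "continuous_on ({0..1} \<times> UNIV) (\<lambda>(s,y). k s y)"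
  and cky: "continuous_on ({0..1} \<times> UNIV) (\<lambda>(s,y). ky s y)"
  and ckyy: "continuous_on ({0..1} \<times> UNIV) (\<lambda>(s,y). kyy s y)"
  unfolding h_def hy_def hyy_def k_def ky_def kyy_def z_def zy_def zyy_def split_beta
  by (auto intro!: continuous_intros)

lemma h_out: "y \<notin> {a..b} \<Longrightarrow> h s y = 0 \<and> hy s y = 0 \<and> hyy s y = 0"
  using P_out by (simp add: h_def hy_def hyy_def)

lemma bounds: "\<exists>M L L2. \<forall>s\<in>{0..1}. \<forall>y. \<bar>h s y\<bar> \<le> M \<and> \<bar>hy s y\<bar> \<le> L \<and> \<bar>hyy s y\<bar> \<le> L2"
proof -
  obtain M where "\<forall>s\<in>{0..1}. \<forall>y. \<bar>h s y\<bar> \<le> M" using bounded_outside[OF ch] h_out by blast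
  moreover obtain L where "\<forall>s\<in>{0..1}. \<forall>y. \<bar>hy s y\<bar> \<le> L" using bounded_outside[OF chy] h_out by blast
  moreover obtain L2 where "\<forall>s\<in>{0..1}. \<forall>y. \<bar>hyy s y\<bar> \<le> L2" using bounded_outside[OF chyy] h_out by blast
  ultimately show ?thesis by blast
qed

lemma k_chain:
  assumes "(g has_real_derivative g') (at s within S)"
  shows "((\<lambda>s. k s (g s)) has_real_derivative R1 (z s (g s)) * (zy s (g s) * g' + P1 (g s))) (at s within S)"
proof -
  have "((\<lambda>s. z s (g s)) has_real_derivative zy s (g s) * g' + P1 (g s)) (at s within S)"
    unfolding z_def zy_def
    using DERIV_chain2[OF dW1 assms] DERIV_chain2[OF dP1 assms]
    by (auto intro!: derivative_eq_intros simp: algebra_simps)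
  from DERIV_chain2[OF dR this] show ?thesis by (simp add: k_def)
qed

end

lemma ftc01:
  fixes f f' :: "real \<Rightarrow> real"
  assumes cf: "continuous_on {0..1} f"
    and df: "\<And>s. 0 < s \<Longrightarrow> s < 1 \<Longrightarrow> (f has_real_derivative f' s) (at s)"
    and s: "s \<in> {0..1}"
  shows "f s = f 0 + integral {0..s} f'"
proof -
  have "(f' has_integral (f s - f 0)) {0..s}"
  proof (rule fundamental_theorem_of_calculus_interior)
    show "continuous_on {0..s} f" using cf s by (auto intro: continuous_on_subset)
    show "(f has_vector_derivative f' x) (at x)" if "x \<in> {0<..<s}" for x
      using df[of x] that s by (auto simp: has_real_derivative_iff_has_vector_derivative)
  qed (use s in auto)
  then show ?thesis by (simp add: integral_unique)
qed

lemma alg_sg: "(A::real) \<noteq> 0 \<Longrightarrow> ((A - W*(-W*A - U*B))*A - U*(B*(-W*A - U*B)))/(A*A) = 1 + (W + U/A*B)^2"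
  by (simp add: divide_simps power2_eq_square) algebra

context setting begin

definition "u x t = \<eta> t x - w (\<xi> t x)"
definition "sg x t = u x t / P0 (\<xi> t x)"
definition "good x t \<longleftrightarrow> (\<forall>r\<in>{0..t}. P0 (\<xi> r x) \<noteq> 0)"

lemma dxi: "((\<lambda>t. \<xi> t x) has_real_derivative (- W1 (\<xi> t x) * P0 (\<xi> t x) - u x t * P1 (\<xi> t x))) (at t)"
  using ode_\<xi> by (simp add: deriv_P0 u_def W1_def P0_def)

lemma deta: "((\<lambda>t. \<eta> t x) has_real_derivative P0 (\<xi> t x)) (at t)"
  using ode_\<eta> by (simp add: P0_def)

lemma du: "((\<lambda>t. u x t) has_real_derivative
    P0 (\<xi> t x) - W1 (\<xi> t x) * (- W1 (\<xi> t x) * P0 (\<xi> t x) - u x t * P1 (\<xi> t x))) (at t)"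
  using DERIV_diff[OF deta[of x t] DERIV_chain2[OF dW0 dxi[of x t]]] unfolding u_def by simp

lemma cxi: "continuous_on S (\<lambda>t. \<xi> t x)"
  using dxi by (auto intro!: continuous_at_imp_continuous_on DERIV_isCont)
lemma ceta: "continuous_on S (\<lambda>t. \<eta> t x)"
  using deta by (auto intro!: continuous_at_imp_continuous_on DERIV_isCont)
lemma cu: "continuous_on S (\<lambda>t. u x t)"
  unfolding u_def using cxi ceta by (auto intro!: continuous_intros)
lemma cP0xi: "continuous_on S (\<lambda>t. P0 (\<xi> t x))"
  using cxi by (auto intro!: continuous_intros)

lemma dsg:
  assumes nz: "P0 (\<xi> t x) \<noteq> 0"
  shows "((\<lambda>t. sg x t) has_real_derivative 1 + (z (sg x t) (\<xi> t x))^2) (at t)"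
proof -
  have "((\<lambda>t. u x t / P0 (\<xi> t x)) has_real_derivative
     ((P0 (\<xi> t x) - W1 (\<xi> t x) * (- W1 (\<xi> t x) * P0 (\<xi> t x) - u x t * P1 (\<xi> t x))) * P0 (\<xi> t x)
       - u x t * (P1 (\<xi> t x) * (- W1 (\<xi> t x) * P0 (\<xi> t x) - u x t * P1 (\<xi> t x)))) / (P0 (\<xi> t x) * P0 (\<xi> t x))) (at t)"
    using DERIV_divide[OF du DERIV_chain2[OF dP0 dxi] nz] by simp
  moreover have "((P0 (\<xi> t x) - W1 (\<xi> t x) * (- W1 (\<xi> t x) * P0 (\<xi> t x) - u x t * P1 (\<xi> t x))) * P0 (\<xi> t x)
       - u x t * (P1 (\<xi> t x) * (- W1 (\<xi> t x) * P0 (\<xi> t x) - u x t * P1 (\<xi> t x)))) / (P0 (\<xi> t x) * P0 (\<xi> t x))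
     = 1 + (z (sg x t) (\<xi> t x))^2"
    unfolding z_def sg_def by (rule alg_sg[OF nz])
  ultimately show ?thesis by (simp add: sg_def[abs_def])
qed

lemma sg0: "sg x 0 = 0" using init by (simp add: sg_def u_def)

lemma good0: "P0 x \<noteq> 0 \<Longrightarrow> good x 0" using init by (simp add: good_def)

lemma good_mono: "good x t \<Longrightarrow> t' \<le> t \<Longrightarrow> good x t'" by (auto simp: good_def)

lemma sg_cont:
  assumes "good x t"
  shows "continuous_on {0..t} (\<lambda>r. sg x r)"
proof (rule continuous_at_imp_continuous_on, rule ballI)
  fix r assume "r \<in> {0..t}"
  then have "P0 (\<xi> r x) \<noteq> 0" using assms by (auto simp: good_def)
  then show "isCont (\<lambda>r. sg x r) r" by (rule DERIV_isCont[OF dsg])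
qed

lemma sg_mono:
  assumes "0 \<le> t1" "t1 \<le> t2" "good x t2"
  shows "sg x t2 - sg x t1 \<ge> t2 - t1"
proof -
  have "(\<lambda>r. sg x r - r) t1 \<le> (\<lambda>r. sg x r - r) t2"
  proof (rule deriv_nonneg_imp_mono[where g="\<lambda>r. sg x r - r" and g'="\<lambda>r. (z (sg x r) (\<xi> r x))^2"])
    fix r assume r: "r \<in> {t1..t2}"
    then have nz: "P0 (\<xi> r x) \<noteq> 0" using assms by (auto simp: good_def)
    show "((\<lambda>r. sg x r - r) has_real_derivative (z (sg x r) (\<xi> r x))^2) (at r)"
      using DERIV_diff[OF dsg[OF nz] DERIV_ident] by simp
  qed (use assms in auto)
  then show ?thesis by simp
qed

lemma sg_ge: "good x t \<Longrightarrow> 0 \<le> t \<Longrightarrow> sg x t \<ge> t"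
  using sg_mono[of 0 t x] sg0 by simp

lemma hit_uniq:
  assumes "0 \<le> t1" "0 \<le> t2" "good x t1" "good x t2" "sg x t1 = sg x t2"
  shows "t1 = t2"
proof (cases "t1 \<le> t2")
  case True
  then show ?thesis using sg_mono[of t1 t2 x] assms by linarith
next
  case False
  then show ?thesis using sg_mono[of t2 t1 x] assms by linarith
qed


lemma u_sg: "P0 (\<xi> t x) \<noteq> 0 \<Longrightarrow> u x t = sg x t * P0 (\<xi> t x)"
  by (simp add: sg_def)

lemma u0: "u x 0 = 0" using init by (simp add: u_def)

lemma R_bound: "\<exists>R. \<forall>y. \<bar>P1 y * (\<bar>W1 y\<bar> + \<bar>P1 y\<bar>)\<bar> \<le> R"
proof -
  define gg where "gg s y = P1 y * (\<bar>W1 y\<bar> + \<bar>P1 y\<bar>)" for s y :: real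
  have c: "continuous_on ({0..1} \<times> UNIV) (\<lambda>(s,y). gg s y)"
    unfolding gg_def by (auto intro!: continuous_intros simp: split_beta)
  have H: "\<And>s y. y \<notin> {a..b} \<Longrightarrow> gg s y = 0" using P_out by (simp add: gg_def)
  obtain M where "\<forall>s\<in>{0..1}. \<forall>y. \<bar>gg s y\<bar> \<le> M"
    using bounded_outside[OF c H] by blast
  then show ?thesis by (auto simp: gg_def)
qed

lemma hit_ex:
  assumes x: "P0 x \<noteq> 0" and s: "s \<in> {0..1}"
  shows "\<exists>t. 0 \<le> t \<and> t \<le> s \<and> good x t \<and> sg x t = s"
proof (cases "s = 0")
  case True
  then show ?thesis using good0[OF x] sg0 by auto
next
  case False
  then have spos: "s > 0" using s by auto
  define g where "g t = u x t - s * P0 (\<xi> t x)" for t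
  have cg: "continuous_on S g" for S unfolding g_def[abs_def] using cu cP0xi cxi by (auto intro!: continuous_intros)
  have g_sg: "g t = 0 \<longleftrightarrow> sg x t = s" if "P0 (\<xi> t x) \<noteq> 0" for t
    using that by (auto simp: g_def sg_def field_simps)
  define Z where "Z = {t. t \<in> {0..1} \<and> P0 (\<xi> t x) * g t = 0}"
  have Zne: "Z \<noteq> {}"
  proof (cases "good x 1")
    case True
    have "\<exists>t. 0 \<le> t \<and> t \<le> 1 \<and> sg x t = s"
      using IVT'[of "sg x" 0 s 1] sg_cont[OF True] sg0 sg_ge[OF True] s by auto
    then obtain t where t: "0 \<le> t" "t \<le> 1" "sg x t = s" by blast
    then have "P0 (\<xi> t x) \<noteq> 0" using True by (auto simp: good_def)
    then have "g t = 0" using g_sg t by auto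
    then show ?thesis using t by (auto simp: Z_def)
  next
    case False
    then obtain r where "r \<in> {0..1}" "P0 (\<xi> r x) = 0" by (auto simp: good_def)
    then show ?thesis by (auto simp: Z_def)
  qed
  have "Z = {0..1} \<inter> {t. P0 (\<xi> t x) * g t = 0}" by (auto simp: Z_def)
  moreover have "closed {t. P0 (\<xi> t x) * g t = 0}"
    by (rule closed_Collect_eq) (auto intro!: continuous_intros cP0xi cg)
  ultimately have Zcl: "closed Z" by (simp add: closed_Int)
  have Zbdd: "bdd_below Z" by (rule bdd_belowI[of _ 0]) (auto simp: Z_def)
  define t' where "t' = Inf Z"
  have t'Z: "t' \<in> Z" unfolding t'_def by (rule closed_contains_Inf[OF Zne Zbdd Zcl])
  have low: "t' \<le> t" if "t \<in> Z" for t unfolding t'_def by (rule cInf_lower[OF that Zbdd])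
  have t'01: "0 \<le> t'" "t' \<le> 1" using t'Z by (auto simp: Z_def)
  have before: "P0 (\<xi> r x) \<noteq> 0 \<and> g r \<noteq> 0" if "0 \<le> r" "r < t'" for r
  proof (rule ccontr)
    assume "\<not> (P0 (\<xi> r x) \<noteq> 0 \<and> g r \<noteq> 0)"
    then have "r \<in> Z" using that t'01 by (auto simp: Z_def)
    then show False using low[of r] that by auto
  qed
  have t'pos: "t' > 0"
  proof (rule ccontr)
    assume "\<not> t' > 0"
    then have "t' = 0" using t'01 by auto
    then have "P0 x * g 0 = 0" using t'Z init by (auto simp: Z_def)
    moreover have "g 0 = - s * P0 x" using u0 init by (simp add: g_def)
    ultimately show False using x spos by auto
  qed
  have goodr: "good x r" if "0 \<le> r" "r < t'" for r
    using before that by (auto simp: good_def)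
  have sg_lt: "0 \<le> sg x r \<and> sg x r < s" if r: "0 \<le> r" "r < t'" for r
  proof
    show "0 \<le> sg x r" using sg_ge[OF goodr[OF r] r(1)] r by linarith
    show "sg x r < s"
    proof (rule ccontr)
      assume "\<not> sg x r < s"
      then obtain r' where r': "0 \<le> r'" "r' \<le> r" "sg x r' = s"
        using IVT'[of "sg x" 0 s r] sg_cont[OF goodr[OF r]] sg0 spos r by auto
      then have "P0 (\<xi> r' x) \<noteq> 0" "g r' \<noteq> 0" using before[of r'] r by auto
      then show False using g_sg r' by auto
    qed
  qed
  have nzt': "P0 (\<xi> t' x) \<noteq> 0"
  proof
    assume z0: "P0 (\<xi> t' x) = 0"
    obtain R where R: "\<And>y. \<bar>P1 y * (\<bar>W1 y\<bar> + \<bar>P1 y\<bar>)\<bar> \<le> R" using R_bound by blast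
    define G where "G t = P0 (\<xi> t x) * P0 (\<xi> t x) * exp (2 * R * t)" for t
    have "G 0 \<le> G t'"
    proof (rule DERIV_nonneg_imp_increasing_open[OF t'01(1)])
      show "continuous_on {0..t'} G" unfolding G_def[abs_def]
        using cP0xi cxi by (auto intro!: continuous_intros)
      fix r assume r: "0 < r" "r < t'"
      define P where "P = P0 (\<xi> r x)"
      define D where "D = P1 (\<xi> r x) * (- W1 (\<xi> r x) * P0 (\<xi> r x) - u x r * P1 (\<xi> r x))"
      have dP: "((\<lambda>t. P0 (\<xi> t x)) has_real_derivative D) (at r)"
        unfolding D_def using DERIV_chain2[OF dP0 dxi[of x r]] .
      have dG: "(G has_real_derivative (D * P + P * D) * exp (2 * R * r) + P * P * (exp (2 * R * r) * (2 * R))) (at r)"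
        unfolding G_def[abs_def] P_def
        by (auto intro!: derivative_eq_intros dP)
      have Pnz: "P \<noteq> 0" using before[of r] r by (simp add: P_def)
      have "D * P = - (P * P) * (P1 (\<xi> r x) * (W1 (\<xi> r x) + sg x r * P1 (\<xi> r x)))"
        using u_sg[OF Pnz[unfolded P_def]] by (simp add: D_def P_def algebra_simps)
      moreover have "\<bar>P1 (\<xi> r x) * (W1 (\<xi> r x) + sg x r * P1 (\<xi> r x))\<bar> \<le> R"
      proof -
        have sr: "0 \<le> sg x r" "sg x r \<le> 1" using sg_lt[of r] r s by auto
        have "\<bar>W1 (\<xi> r x) + sg x r * P1 (\<xi> r x)\<bar> \<le> \<bar>W1 (\<xi> r x)\<bar> + \<bar>P1 (\<xi> r x)\<bar>"
        proof -
          have "\<bar>sg x r * P1 (\<xi> r x)\<bar> \<le> \<bar>P1 (\<xi> r x)\<bar>"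
            using sr by (simp add: abs_mult mult_left_le_one_le)
          then show ?thesis by linarith
        qed
        then have "\<bar>P1 (\<xi> r x) * (W1 (\<xi> r x) + sg x r * P1 (\<xi> r x))\<bar> \<le> \<bar>P1 (\<xi> r x) * (\<bar>W1 (\<xi> r x)\<bar> + \<bar>P1 (\<xi> r x)\<bar>)\<bar>"
          by (simp add: abs_mult mult_left_mono)
        then show ?thesis using R[of "\<xi> r x"] by linarith
      qed
      ultimately have "D * P \<ge> - (P * P) * R"
      proof -
        assume eq: "D * P = - (P * P) * (P1 (\<xi> r x) * (W1 (\<xi> r x) + sg x r * P1 (\<xi> r x)))"
          and bd: "\<bar>P1 (\<xi> r x) * (W1 (\<xi> r x) + sg x r * P1 (\<xi> r x))\<bar> \<le> R"
        have "P * P \<ge> 0" by simp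
        then have "(P * P) * (P1 (\<xi> r x) * (W1 (\<xi> r x) + sg x r * P1 (\<xi> r x))) \<le> (P * P) * R"
          using bd by (intro mult_left_mono) auto
        moreover have "D * P = - (P * P * (P1 (\<xi> r x) * (W1 (\<xi> r x) + sg x r * P1 (\<xi> r x))))"
          using eq by simp
        moreover have "- (P * P) * R = - (P * P * R)" by simp
        ultimately show ?thesis by linarith
      qed
      then have "(D * P + P * D) * exp (2 * R * r) + P * P * (exp (2 * R * r) * (2 * R)) \<ge> 0"
      proof -
        assume "D * P \<ge> - (P * P) * R"
        then have "D * P + P * D + P * P * (2 * R) \<ge> 0" by (simp add: algebra_simps)
        then have "(D * P + P * D + P * P * (2 * R)) * exp (2 * R * r) \<ge> 0" by simp
        then show ?thesis by (simp add: algebra_simps)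
      qed
      then show "\<exists>y. (G has_real_derivative y) (at r) \<and> 0 \<le> y" using dG by blast
    qed
    moreover have "G 0 > 0"
    proof -
      have "0 < P0 x * P0 x" using x not_real_square_gt_zero by metis
      then show ?thesis using init by (simp add: G_def)
    qed
    moreover have "G t' = 0" using z0 by (simp add: G_def)
    ultimately show False by simp
  qed
  have "g t' = 0" using t'Z nzt' by (auto simp: Z_def)
  then have sgt': "sg x t' = s" using g_sg nzt' by auto
  have goodt': "good x t'"
    unfolding good_def
  proof
    fix r assume "r \<in> {0..t'}"
    then show "P0 (\<xi> r x) \<noteq> 0" using before[of r] nzt' by (cases "r = t'") auto
  qed
  have "t' \<le> s" using sg_ge[OF goodt' t'01(1)] sgt' by simp
  then show ?thesis using t'01 goodt' sgt' by blast
qed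

definition "hit x s = (THE t. 0 \<le> t \<and> t \<le> s \<and> good x t \<and> sg x t = s)"

lemma hit:
  assumes "P0 x \<noteq> 0" "s \<in> {0..1}"
  shows "0 \<le> hit x s \<and> hit x s \<le> s \<and> good x (hit x s) \<and> sg x (hit x s) = s"
proof -
  obtain t where t: "0 \<le> t \<and> t \<le> s \<and> good x t \<and> sg x t = s" using hit_ex[OF assms] by blast
  have u: "t' = t" if "0 \<le> t' \<and> t' \<le> s \<and> good x t' \<and> sg x t' = s" for t'
    by (rule hit_uniq) (use t that in auto)
  show ?thesis unfolding hit_def by (rule theI[where P="\<lambda>t. 0 \<le> t \<and> t \<le> s \<and> good x t \<and> sg x t = s", OF t u])
qed

end

lemma C2_on_cong:
  assumes "C2_on S f" "\<And>p. p \<in> S \<Longrightarrow> f p = g p"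
  shows "C2_on S g"
proof -
  obtain f1 f2 f11 f12 f21 f22 where
    A: "\<forall>p\<in>S. (f has_derivative (\<lambda>h. f1 p * fst h + f2 p * snd h)) (at p within S)
           \<and> (f1 has_derivative (\<lambda>h. f11 p * fst h + f12 p * snd h)) (at p within S)
           \<and> (f2 has_derivative (\<lambda>h. f21 p * fst h + f22 p * snd h)) (at p within S)"
    and B: "continuous_on S f11" "continuous_on S f12" "continuous_on S f21" "continuous_on S f22"
    using assms(1) unfolding C2_on_def by blast
  have "\<forall>p\<in>S. (g has_derivative (\<lambda>h. f1 p * fst h + f2 p * snd h)) (at p within S)"
  proof
    fix p assume p: "p \<in> S"
    show "(g has_derivative (\<lambda>h. f1 p * fst h + f2 p * snd h)) (at p within S)"
      by (rule has_derivative_transform[OF p _ conjunct1[OF A[rule_format, OF p]]]) (use assms(2) in auto)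
  qed
  then show ?thesis unfolding C2_on_def using A B by blast
qed

context setting begin

definition "Yf s x = (if P0 x = 0 then x else \<xi> (hit x s) x)"

lemma hit0: "P0 x \<noteq> 0 \<Longrightarrow> hit x 0 = 0"
  using hit[of x 0] by auto

lemma hit_lip:
  assumes x: "P0 x \<noteq> 0" and s1: "s1 \<in> {0..1}" and s2: "s2 \<in> {0..1}"
  shows "\<bar>hit x s2 - hit x s1\<bar> \<le> \<bar>s2 - s1\<bar>"
proof -
  have H1: "0 \<le> hit x s1" "good x (hit x s1)" "sg x (hit x s1) = s1" using hit[OF x s1] by auto
  have H2: "0 \<le> hit x s2" "good x (hit x s2)" "sg x (hit x s2) = s2" using hit[OF x s2] by auto
  show ?thesis
  proof (cases "hit x s1 \<le> hit x s2")
    case True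
    then show ?thesis using sg_mono[OF H1(1) True H2(2)] H1 H2 by linarith
  next
    case False
    then show ?thesis using sg_mono[OF H2(1) _ H1(2)] H1 H2 by linarith
  qed
qed

lemma hit_cont:
  assumes x: "P0 x \<noteq> 0"
  shows "continuous_on {0..1} (hit x)"
  unfolding continuous_on_iff
proof (intro ballI allI impI)
  fix s e assume s: "s \<in> {0..1::real}" and e: "(e::real) > 0"
  show "\<exists>d>0. \<forall>s'\<in>{0..1}. dist s' s < d \<longrightarrow> dist (hit x s') (hit x s) < e"
  proof (intro exI[of _ e] conjI ballI impI e)
    fix s' assume s': "s' \<in> {0..1}" and d: "dist s' s < e"
    have "\<bar>hit x s' - hit x s\<bar> \<le> \<bar>s' - s\<bar>" by (rule hit_lip[OF x s s'])
    then show "dist (hit x s') (hit x s) < e" using d by (simp add: dist_real_def)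
  qed
qed

lemma Yf_eq: "P0 x \<noteq> 0 \<Longrightarrow> Yf s x = \<xi> (hit x s) x" by (simp add: Yf_def)

lemma hit_deriv:
  assumes x: "P0 x \<noteq> 0" and s: "0 < s" "s < 1"
  shows "(hit x has_real_derivative k s (Yf s x)) (at s)"
proof -
  have s01: "s \<in> {0..1}" using s by auto
  have H: "0 \<le> hit x s" "good x (hit x s)" "sg x (hit x s) = s" using hit[OF x s01] by auto
  have nz: "P0 (\<xi> (hit x s) x) \<noteq> 0" using H(1,2) by (auto simp: good_def)
  have "(hit x has_real_derivative inverse (1 + (z s (\<xi> (hit x s) x))^2)) (at s)"
  proof (rule DERIV_inverse_function[where f="sg x" and a=0 and b=1])
    show "(sg x has_real_derivative 1 + (z s (\<xi> (hit x s) x))^2) (at (hit x s))"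
      using dsg[OF nz] H(3) by simp
    show "1 + (z s (\<xi> (hit x s) x))^2 \<noteq> 0" by (rule nz1)
    show "sg x (hit x y) = y" if "0 < y" "y < 1" for y
      using hit[OF x, of y] that by auto
    show "isCont (hit x) s"
      using continuous_on_interior[OF hit_cont[OF x], of s] s by auto
  qed (use s in auto)
  then show ?thesis using x by (simp add: k_def R_def Yf_def inverse_eq_divide)
qed

lemma Y_deriv:
  assumes x: "P0 x \<noteq> 0" and s: "0 < s" "s < 1"
  shows "((\<lambda>s. Yf s x) has_real_derivative h s (Yf s x)) (at s)"
proof -
  have s01: "s \<in> {0..1}" using s by auto
  have H: "0 \<le> hit x s" "good x (hit x s)" "sg x (hit x s) = s" using hit[OF x s01] by auto
  have nz: "P0 (\<xi> (hit x s) x) \<noteq> 0" using H(1,2) by (auto simp: good_def)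
  have us: "u x (hit x s) = s * P0 (\<xi> (hit x s) x)" using u_sg[OF nz] H(3) by simp
  have "((\<lambda>s. \<xi> (hit x s) x) has_real_derivative
      (- W1 (\<xi> (hit x s) x) * P0 (\<xi> (hit x s) x) - u x (hit x s) * P1 (\<xi> (hit x s) x)) * k s (Yf s x)) (at s)"
    using DERIV_chain2[OF dxi hit_deriv[OF x s]] .
  moreover have "(- W1 (\<xi> (hit x s) x) * P0 (\<xi> (hit x s) x) - u x (hit x s) * P1 (\<xi> (hit x s) x)) * k s (Yf s x)
      = h s (Yf s x)"
    using x by (simp add: us Yf_def k_def h_def Q_def R_def z_def algebra_simps add_divide_distrib)
  ultimately show ?thesis using x by (simp add: Yf_def)
qed

lemma Y_cs: "continuous_on {0..1} (\<lambda>s. Yf s x)"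
proof (cases "P0 x = 0")
  case True then show ?thesis by (simp add: Yf_def)
next
  case False
  have "continuous_on {0..1} (\<lambda>s. \<xi> (hit x s) x)"
    by (rule continuous_on_compose2[OF cxi hit_cont[OF False]]) auto
  then show ?thesis using False by (simp add: Yf_def)
qed

lemma h_cs: "continuous_on {0..1} (\<lambda>r. h r (Yf r x))"
proof -
  have "continuous_on {0..1} ((\<lambda>(s,y). h s y) \<circ> (\<lambda>r. (r, Yf r x)))"
    by (rule continuous_on_compose[OF _ continuous_on_subset[OF ch]])
       (auto intro!: continuous_intros Y_cs)
  then show ?thesis by (simp add: o_def)
qed

lemma Yint: "s \<in> {0..1} \<Longrightarrow> Yf s x = x + integral {0..s} (\<lambda>r. h r (Yf r x))"
proof (cases "P0 x = 0")
  case True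
  assume "s \<in> {0..1}"
  have "h r (Yf r x) = 0" for r using True by (simp add: Yf_def h_def)
  then show ?thesis using True by (simp add: Yf_def)
next
  case False
  assume s: "s \<in> {0..1}"
  have "Yf s x = Yf 0 x + integral {0..s} (\<lambda>r. h r (Yf r x))"
    by (rule ftc01[OF Y_cs Y_deriv[OF False] s])
  moreover have "Yf 0 x = x" using False hit0[OF False] init by (simp add: Yf_def)
  ultimately show ?thesis by simp
qed

lemma T_eq:
  assumes x: "P0 x \<noteq> 0" and s: "s \<in> {0..1}"
  shows "hit x s = integral {0..s} (\<lambda>r. k r (Yf r x))"
  using ftc01[OF hit_cont[OF x] hit_deriv[OF x] s] hit0[OF x] by simp

lemma hit_props:
  assumes x: "P0 x \<noteq> 0" and s: "s \<in> {0..1}"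
  shows "\<eta> (hit x s) x = w (\<xi> (hit x s) x) + s * P0 (\<xi> (hit x s) x)"
    and "\<And>t. 0 \<le> t \<Longrightarrow> t < hit x s \<Longrightarrow> \<eta> t x \<noteq> w (\<xi> t x) + s * P0 (\<xi> t x)"
    and "\<And>t. t \<in> {0..hit x s} \<Longrightarrow> P0 (\<xi> t x) * P0 x > 0"
proof -
  have H: "0 \<le> hit x s" "hit x s \<le> s" "good x (hit x s)" "sg x (hit x s) = s" using hit[OF x s] by auto
  have nz: "P0 (\<xi> (hit x s) x) \<noteq> 0" using H(1,3) by (auto simp: good_def)
  show "\<eta> (hit x s) x = w (\<xi> (hit x s) x) + s * P0 (\<xi> (hit x s) x)"
    using u_sg[OF nz] H(4) by (simp add: u_def)
  show "\<eta> t x \<noteq> w (\<xi> t x) + s * P0 (\<xi> t x)" if t: "0 \<le> t" "t < hit x s" for t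
  proof
    assume eq: "\<eta> t x = w (\<xi> t x) + s * P0 (\<xi> t x)"
    have gt: "good x t" using good_mono[OF H(3)] t by auto
    then have nzt: "P0 (\<xi> t x) \<noteq> 0" using t by (auto simp: good_def)
    have "sg x t = s" using eq nzt by (simp add: sg_def u_def)
    then have "t = hit x s" using hit_uniq[OF t(1) H(1) gt H(3)] H(4) by simp
    then show False using t by simp
  qed
  show "P0 (\<xi> t x) * P0 x > 0" if t: "t \<in> {0..hit x s}" for t
  proof (rule ccontr)
    assume neg: "\<not> P0 (\<xi> t x) * P0 x > 0"
    have gt: "good x t" using good_mono[OF H(3)] t by auto
    have cc: "continuous_on {0..t} (\<lambda>r. P0 (\<xi> r x))" by (rule cP0xi)
    have P00: "P0 (\<xi> 0 x) = P0 x" using init by simp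
    obtain r where r: "0 \<le> r" "r \<le> t" "P0 (\<xi> r x) = 0"
    proof (cases "P0 x > 0")
      case True
      then have "P0 (\<xi> t x) \<le> 0" using neg by (simp add: zero_less_mult_iff not_less)
      then show ?thesis using IVT2'[of "\<lambda>r. P0 (\<xi> r x)" t 0 0] cc P00 True t that by auto
    next
      case False
      then have "P0 x < 0" using x by simp
      then have "P0 (\<xi> t x) \<ge> 0" using neg by (simp add: zero_less_mult_iff not_less)
      then show ?thesis using IVT'[of "\<lambda>r. P0 (\<xi> r x)" 0 0 t] cc P00 \<open>P0 x < 0\<close> t that by auto
    qed
    then show False using gt by (auto simp: good_def)
  qed
qed

end

theorem theorem3p3:
  fixes w :: "real \<Rightarrow> real" and p :: "real poly" and a b :: real
    and \<xi> \<eta> :: "real \<Rightarrow> real \<Rightarrow> real"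
  assumes w_C3: "C3 w" and w_per: "periodic w"
    and w_pos: "\<forall>x\<in>{-1..1}. w x > 0"
    and ab: "-1 < a" "a < b" "b < 1"
    and p_a: "\<forall>k\<le>3. poly ((pderiv ^^ k) p) a = 0"
    and p_b: "\<forall>k\<le>3. poly ((pderiv ^^ k) p) b = 0"
    and ode_\<xi>: "\<forall>x t. ((\<lambda>t. \<xi> t x) has_real_derivative
        (- deriv w (\<xi> t x) * bump p a b (\<xi> t x)
         - (\<eta> t x - w (\<xi> t x)) * deriv (bump p a b) (\<xi> t x))) (at t)"
    and ode_\<eta>: "\<forall>x t. ((\<lambda>t. \<eta> t x) has_real_derivative bump p a b (\<xi> t x)) (at t)"
    and init: "\<forall>x. \<xi> 0 x = x \<and> \<eta> 0 x = w x"
  shows "\<exists>t0 :: real \<Rightarrow> real \<Rightarrow> real.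
    (\<forall>s\<in>{0..1}. \<forall>x.
       t0 s x \<ge> 0
     \<and> \<eta> (t0 s x) x = w (\<xi> (t0 s x) x) + s * bump p a b (\<xi> (t0 s x) x)
     \<and> (\<forall>t. 0 \<le> t \<and> t < t0 s x \<longrightarrow> \<eta> t x \<noteq> w (\<xi> t x) + s * bump p a b (\<xi> t x))
     \<and> (s = 0 \<or> bump p a b x = 0 \<longrightarrow> t0 s x = 0)
     \<and> (bump p a b x \<noteq> 0 \<and> deriv (bump p a b) x = 0 \<and> deriv w x = 0 \<longrightarrow> t0 s x = s)
     \<and> (\<not> (s = 0 \<or> bump p a b x = 0)
          \<and> \<not> (bump p a b x \<noteq> 0 \<and> deriv (bump p a b) x = 0 \<and> deriv w x = 0)
          \<longrightarrow> 0 \<le> t0 s x \<and> t0 s x \<le> s)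
     \<and> (bump p a b x \<noteq> 0 \<longrightarrow>
          (\<forall>t\<in>{0..t0 s x}. bump p a b (\<xi> t x) * bump p a b x > 0)))
    \<and> C2_on ({0..1} \<times> {x. bump p a b x \<noteq> 0}) (\<lambda>(s, x). t0 s x)"
proof -
  interpret setting w p a b \<xi> \<eta>
    by unfold_locales (use w_C3 ab p_a p_b ode_\<xi> ode_\<eta> init in auto)
  obtain M L L2 where bd: "\<forall>s\<in>{0..1}. \<forall>y. \<bar>h s y\<bar> \<le> M \<and> \<bar>hy s y\<bar> \<le> L \<and> \<bar>hyy s y\<bar> \<le> L2"
    using bounds by blast
  interpret O: odedep h hy hyy Yf L L2 M
    by unfold_locales (use dh dhy ch chy chyy bd Yint Y_cs in auto)
  define F where "F s x = R1 (z s (Yf s x)) * (zy s (Yf s x) * h s (Yf s x) + P1 (Yf s x))" for s x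
  interpret OT: odedepT h hy hyy Yf L L2 M k ky kyy F
  proof unfold_locales
    show "(k s has_real_derivative ky s y) (at y)" for s y by (rule dk)
    show "(ky s has_real_derivative kyy s y) (at y)" for s y by (rule dky)
    show "continuous_on ({0..1} \<times> UNIV) (\<lambda>(s, y). k s y)" by (rule ck)
    show "continuous_on ({0..1} \<times> UNIV) (\<lambda>(s, y). ky s y)" by (rule cky)
    show "continuous_on ({0..1} \<times> UNIV) (\<lambda>(s, y). kyy s y)" by (rule ckyy)
    show "((\<lambda>s. k s (Yf s x)) has_real_derivative F s x) (at s within {0..1})" if "s \<in> {0..1}" for s x
      unfolding F_def using k_chain[OF O.Y_deriv_within[OF that]] by simp
    have cG: "continuous_on ({0..1} \<times> UNIV) (\<lambda>(s,y). R1 (z s y) * (zy s y * h s y + P1 y))"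
      unfolding z_def zy_def h_def split_beta by (auto intro!: continuous_intros)
    show "continuous_on ({0..1} \<times> UNIV) (\<lambda>(s, x). F s x)"
      unfolding F_def by (rule O.comp_cont2[OF cG])
  qed
  define t0 where "t0 s x = (if P0 x = 0 then 0 else hit x s)" for s x
  have eqs: "bump p a b = P0" "deriv (bump p a b) = P1" "deriv w = W1" "deriv P0 = P1"
    by (simp_all add: P0_def deriv_P0 W1_def)
  have main: "t0 s x \<ge> 0
     \<and> \<eta> (t0 s x) x = w (\<xi> (t0 s x) x) + s * P0 (\<xi> (t0 s x) x)
     \<and> (\<forall>t. 0 \<le> t \<and> t < t0 s x \<longrightarrow> \<eta> t x \<noteq> w (\<xi> t x) + s * P0 (\<xi> t x))
     \<and> (s = 0 \<or> P0 x = 0 \<longrightarrow> t0 s x = 0)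
     \<and> (P0 x \<noteq> 0 \<and> P1 x = 0 \<and> W1 x = 0 \<longrightarrow> t0 s x = s)
     \<and> (\<not> (s = 0 \<or> P0 x = 0) \<and> \<not> (P0 x \<noteq> 0 \<and> P1 x = 0 \<and> W1 x = 0)
          \<longrightarrow> 0 \<le> t0 s x \<and> t0 s x \<le> s)
     \<and> (P0 x \<noteq> 0 \<longrightarrow> (\<forall>t\<in>{0..t0 s x}. P0 (\<xi> t x) * P0 x > 0))"
    if s: "s \<in> {0..1}" for s x
  proof (cases "P0 x = 0")
    case True
    then show ?thesis using init by (simp add: t0_def)
  next
    case False
    have H: "0 \<le> hit x s" "hit x s \<le> s" using hit[OF False s] by auto
    have sp: "P1 x = 0 \<and> W1 x = 0 \<Longrightarrow> hit x s = s"
    proof -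
      assume PW: "P1 x = 0 \<and> W1 x = 0"
      have hx: "h r x = 0" for r using PW by (simp add: h_def z_def Q_def)
      have Yx: "Yf r x = x" if r: "r \<in> {0..1}" for r
      proof -
        have "(Yf r x - x)^2 \<le> ((Yf 0 x - x)^2 + 0^2 * r) * exp ((2*L+1) * r)"
        proof (rule gronwall_sq[where f'="\<lambda>q. h q (Yf q x) - h q x" and L=L])
          show "continuous_on {0..r} (\<lambda>q. Yf q x - x)"
            using r by (auto intro!: continuous_intros intro: continuous_on_subset[OF Y_cs])
          show "((\<lambda>q. Yf q x - x) has_real_derivative h q (Yf q x) - h q x) (at q)"
            if "0 < q" "q < r" for q
            using DERIV_diff[OF O.Y_deriv_at[of q x] DERIV_const[of x]] that r hx by auto
          show "\<bar>h q (Yf q x) - h q x\<bar> \<le> L * \<bar>Yf q x - x\<bar> + 0" if "0 < q" "q < r" for q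
            using O.h_lip[of q] that r by auto
        qed (use O.L_nn r in auto)
        then show ?thesis using O.Y0 by simp
      qed
      have "hit x s = integral {0..s} (\<lambda>r. k r (Yf r x))" by (rule T_eq[OF False s])
      also have "\<dots> = integral {0..s} (\<lambda>r. 1)"
        by (rule integral_cong) (use Yx s PW in \<open>auto simp: k_def z_def R_def\<close>)
      also have "\<dots> = s" using s by simp
      finally show ?thesis .
    qed
    have s0: "s = 0 \<Longrightarrow> hit x s = 0" using H by simp
    show ?thesis
      using False H sp s0 hit_props[OF False s] by (auto simp: t0_def)
  qed
  have C2: "C2_on ({0..1} \<times> {x. P0 x \<noteq> 0}) (\<lambda>(s, x). t0 s x)"
  proof (rule C2_on_cong[OF OT.T_C2])
    show "open {x. P0 x \<noteq> 0}" by (rule open_Collect_neq[OF cP0 continuous_on_const])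
    show "(\<lambda>(s, x). OT.T s x) q = (\<lambda>(s, x). t0 s x) q" if "q \<in> {0..1} \<times> {x. P0 x \<noteq> 0}" for q
      using that T_eq by (auto simp: t0_def OT.T_def)
  qed
  show ?thesis
    unfolding eqs
    apply (rule exI[of _ t0])
    apply (rule conjI)
     apply (intro ballI allI)
     apply (erule main)
    using C2 apply simp
    done
qed

end
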